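(* Let $q$ be a prime power, $C\subseteq\mathbb{F}_q^{2n}$ a symplectic self-orthogonal $\mathbb{F}_q$-linear code with stabilizer code $Q(C)\subseteq\mathbb{C}^{q^n}$, and let $\emptyset\neq I\subsetneq J\subseteq\{1,\dots,n\}$. Then $Q(C)$ is $(I,J)$-locally recoverable if and only if \[\sigma_I\left[\pi_J\left(C^{\perp_s}\right)\right]=\sigma_I(C).\]
   Context: $q$ is a power of a prime $p$. Vectors of $\mathbb{F}_q^{2n}$ are written $(\mathbf a|\mathbf b)$, $\mathbf a,\mathbf b\in\mathbb F_q^n$, coordinate pair $(a_j,b_j)$ indexed by $j\in\{1,\dots,n\}$. Symplectic form: $(\mathbf a|\mathbf b)\cdot_s(\mathbf c|\mathbf d)=\mathbf a\cdot\mathbf d-\mathbf b\cdot\mathbf c$; $C^{\perp_s}$ is the dual; $C$ is symplectic self-orthogonal if $C\subseteq C^{\perp_s}$. For $R\subseteq\{1,\dots,n\}$: $\pi_R(\mathbf a|\mathbf b)=(a_j|b_j)_{j\in R}$, puncturing $\pi_R(D)=\{\pi_R(\mathbf y):\mathbf y\in D\}$, shortening $\sigma_R(D)=\{\pi_R(\mathbf y):\mathbf y=(\mathbf a|\mathbf b)\in D,\ \mathrm{supp}(\mathbf a)\cup\mathrm{supp}(\mathbf b)\subseteq R\}$ (the set indicates the coordinates kept); the shortening at $I$ of a code with coordinate pairs indexed by $J\supseteq I$ is defined the same way. Quantum setting: $\xi=e^{2\pi\iota/p}$; on $\mathbb C^q$ with basis indexed by $\mathbb F_q$, $X(a)|x\rangle=|x+a\rangle$,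 $Z(b)|x\rangle=\xi^{\mathrm{tr}_{q/p}(bx)}|x\rangle$; $E_{(\mathbf a,\mathbf b)}=\bigotimes_jX(a_j)Z(b_j)$. $Q(C)$ is the common eigenspace $\{v:Ev=\lambda(E)v\ \forall E\in S\}$, $S$ the commutative group generated by scalars $\xi^\ell\mathcal I$ and the $E_{\mathbf y}$, $\mathbf y\in C$, $\lambda$ a character of $S$ with $\lambda(\xi\mathcal I)=\xi$. Let $\Gamma(\rho)=q^{-2}\sum_{a,b\in\mathbb F_q}X(a)Z(b)\rho(X(a)Z(b))^\dagger$ and $\Gamma^I$ apply $\Gamma$ to the qudits indexed by $I$ and the identity elsewhere. For $\emptyset\ne I\subsetneq J$, a code $Q$ is $(I,J)$-locally recoverable if there is a trace-preserving quantum operation $\mathcal R$ acting only on the qudits indexed by $J$ (identity on the others) with $\mathcal R\circ\Gamma^I(|\varphi\rangle\langle\varphi|)=|\varphi\rangle\langle\varphi|$ for all $|\varphi\rangle\in Q$. *)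

theory Defs
  imports Complex_Main
begin

text \<open>
  The field F_q is a finite field type 'q (q = card (UNIV :: 'q set), p = CHAR('q)).
  The coordinate index set {1,...,n} is a finite type 'n (so J \<subseteq> {1..n} means J :: 'n set).
  A vector (a|b) of F_q^{2n} is a pair of functions 'n \<Rightarrow> 'q.
  Punctured / shortened vectors are represented by zero-padding outside the kept coordinates.
  Vectors of C^{q^n} are functions ('n \<Rightarrow> 'q) \<Rightarrow> complex (basis indexed by F_q^n);
  operators are matrices ('n \<Rightarrow> 'q) \<Rightarrow> ('n \<Rightarrow> 'q) \<Rightarrow> complex  (row, column).
\<close>

type_synonym ('n, 'q) svec = "('n \<Rightarrow> 'q) \<times> ('n \<Rightarrow> 'q)"
type_synonym ('n, 'q) qmat = "('n \<Rightarrow> 'q) \<Rightarrow> ('n \<Rightarrow> 'q) \<Rightarrow> complex"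
type_synonym ('n, 'q) qvec = "('n \<Rightarrow> 'q) \<Rightarrow> complex"

definition sadd :: "('n, 'q::field) svec \<Rightarrow> ('n, 'q) svec \<Rightarrow> ('n, 'q) svec" where
  "sadd u v = (\<lambda>j. fst u j + fst v j, \<lambda>j. snd u j + snd v j)"

definition sscale :: "'q::field \<Rightarrow> ('n, 'q) svec \<Rightarrow> ('n, 'q) svec" where
  "sscale c u = (\<lambda>j. c * fst u j, \<lambda>j. c * snd u j)"

definition linear_code :: "('n, 'q::field) svec set \<Rightarrow> bool" where
  "linear_code C \<longleftrightarrow> (\<lambda>_. 0, \<lambda>_. 0) \<in> C \<and> (\<forall>u\<in>C. \<forall>v\<in>C. sadd u v \<in> C)
     \<and> (\<forall>c. \<forall>u\<in>C. sscale c u \<in> C)"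

definition symp :: "('n::finite, 'q::field) svec \<Rightarrow> ('n, 'q) svec \<Rightarrow> 'q" where
  "symp u v = (\<Sum>j\<in>UNIV. fst u j * snd v j) - (\<Sum>j\<in>UNIV. snd u j * fst v j)"

definition sdual :: "('n::finite, 'q::field) svec set \<Rightarrow> ('n, 'q) svec set" where
  "sdual C = {v. \<forall>c\<in>C. symp v c = 0}"

definition symp_self_orth :: "('n::finite, 'q::field) svec set \<Rightarrow> bool" where
  "symp_self_orth C \<longleftrightarrow> C \<subseteq> sdual C"

definition ssupp :: "('n, 'q::zero) svec \<Rightarrow> 'n set" where
  "ssupp y = {j. fst y j \<noteq> 0} \<union> {j. snd y j \<noteq> 0}"

definition proj :: "'n set \<Rightarrow> ('n, 'q::zero) svec \<Rightarrow> ('n, 'q) svec" where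
  "proj R y = (\<lambda>j. if j \<in> R then fst y j else 0, \<lambda>j. if j \<in> R then snd y j else 0)"

definition puncture :: "'n set \<Rightarrow> ('n, 'q::zero) svec set \<Rightarrow> ('n, 'q) svec set" where
  "puncture R D = proj R ` D"

definition shorten :: "'n set \<Rightarrow> ('n, 'q::zero) svec set \<Rightarrow> ('n, 'q) svec set" where
  "shorten R D = proj R ` {y \<in> D. ssupp y \<subseteq> R}"

definition fdeg :: "'q::{finite,field} itself \<Rightarrow> nat" where
  "fdeg _ = (LEAST m. m > 0 \<and> card (UNIV :: 'q set) = CHAR('q) ^ m)"

text \<open>tr_{q/p}(x) = sum_{i<m} x^(p^i), q = p^m; its value lies in the prime field.\<close>
definition ftrace :: "'q::{finite,field} \<Rightarrow> 'q" where
  "ftrace x = (\<Sum>i<fdeg TYPE('q). x ^ (CHAR('q) ^ i))"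

definition xi :: "'q::{finite,field} itself \<Rightarrow> complex" where
  "xi _ = cis (2 * pi / real CHAR('q))"

text \<open>chi t = xi ^ tr(t), the element tr(t) of F_p read as an integer in {0..p-1}.\<close>
definition chi :: "'q::{finite,field} \<Rightarrow> complex" where
  "chi t = xi TYPE('q) ^ (THE k. k < CHAR('q) \<and> of_nat k = ftrace t)"

definition mmul :: "('n::finite, 'q::finite) qmat \<Rightarrow> ('n, 'q) qmat \<Rightarrow> ('n, 'q) qmat" where
  "mmul A B = (\<lambda>x y. \<Sum>z\<in>UNIV. A x z * B z y)"

definition mapply :: "('n::finite, 'q::finite) qmat \<Rightarrow> ('n, 'q) qvec \<Rightarrow> ('n, 'q) qvec" where
  "mapply A v = (\<lambda>x. \<Sum>y\<in>UNIV. A x y * v y)"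

definition madj :: "('n, 'q) qmat \<Rightarrow> ('n, 'q) qmat" where
  "madj A = (\<lambda>x y. cnj (A y x))"

definition mid :: "('n, 'q) qmat" where
  "mid = (\<lambda>x y. if x = y then 1 else 0)"

definition mscale :: "complex \<Rightarrow> ('n, 'q) qmat \<Rightarrow> ('n, 'q) qmat" where
  "mscale c A = (\<lambda>x y. c * A x y)"

definition mtrace :: "('n::finite, 'q::finite) qmat \<Rightarrow> complex" where
  "mtrace A = (\<Sum>x\<in>UNIV. A x x)"

definition ketbra :: "('n, 'q) qvec \<Rightarrow> ('n, 'q) qmat" where
  "ketbra v = (\<lambda>x y. v x * cnj (v y))"

text \<open>E_(a,b) = tensor_j X(a_j) Z(b_j):  E|x> = xi^{tr(sum_j b_j x_j)} |x + a>.\<close>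
definition pauliE :: "('n::finite, 'q::{finite,field}) svec \<Rightarrow> ('n, 'q) qmat" where
  "pauliE y = (\<lambda>x' x. if x' = (\<lambda>j. x j + fst y j)
                      then chi (\<Sum>j\<in>UNIV. snd y j * x j) else 0)"

inductive_set stab_group :: "('n::finite, 'q::{finite,field}) svec set \<Rightarrow> ('n, 'q) qmat set"
  for C where
    scalar: "mscale (xi TYPE('q) ^ l) mid \<in> stab_group C"
  | gen: "y \<in> C \<Longrightarrow> pauliE y \<in> stab_group C"
  | mult: "A \<in> stab_group C \<Longrightarrow> B \<in> stab_group C \<Longrightarrow> mmul A B \<in> stab_group C"

definition stab_character ::
  "('n::finite, 'q::{finite,field}) svec set \<Rightarrow> (('n, 'q) qmat \<Rightarrow> complex) \<Rightarrow> bool" where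
  "stab_character C lam \<longleftrightarrow>
     (\<forall>A\<in>stab_group C. \<forall>B\<in>stab_group C. lam (mmul A B) = lam A * lam B)
     \<and> (\<forall>A\<in>stab_group C. lam A \<noteq> 0)
     \<and> lam (mscale (xi TYPE('q)) mid) = xi TYPE('q)"

definition stab_code ::
  "('n::finite, 'q::{finite,field}) svec set \<Rightarrow> (('n, 'q) qmat \<Rightarrow> complex) \<Rightarrow> ('n, 'q) qvec set" where
  "stab_code C lam = {v. \<forall>E\<in>stab_group C. mapply E v = (\<lambda>x. lam E * v x)}"

text \<open>Gamma^I(rho) = q^{-2|I|} sum_{a,b supported in I} E_(a,b) rho E_(a,b)^dagger
  (the tensor product of Gamma on the qudits in I and the identity elsewhere).\<close>
definition Gamma ::
  "'n set \<Rightarrow> ('n::finite, 'q::{finite,field}) qmat \<Rightarrow> ('n, 'q) qmat" where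
  "Gamma I rho = mscale (1 / of_nat (card (UNIV :: 'q set) ^ (2 * card I)))
     (\<lambda>x y. \<Sum>e\<in>{e :: ('n, 'q) svec. ssupp e \<subseteq> I}.
        mmul (mmul (pauliE e) rho) (madj (pauliE e)) x y)"

definition restr :: "'n set \<Rightarrow> ('n \<Rightarrow> 'q::zero) \<Rightarrow> ('n \<Rightarrow> 'q)" where
  "restr J x = (\<lambda>j. if j \<in> J then x j else 0)"

text \<open>A \<otimes> identity, where A is an operator on the qudits in J (only its entries on
  configurations supported in J matter).\<close>
definition lift_op :: "'n set \<Rightarrow> ('n, 'q::zero) qmat \<Rightarrow> ('n, 'q) qmat" where
  "lift_op J A = (\<lambda>x y. if (\<forall>j. j \<notin> J \<longrightarrow> x j = y j) then A (restr J x) (restr J y) else 0)"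

definition kraus_map :: "'n set \<Rightarrow> ('n::finite, 'q::{finite,zero}) qmat list \<Rightarrow> ('n, 'q) qmat \<Rightarrow> ('n, 'q) qmat" where
  "kraus_map J As rho = (\<lambda>x y. \<Sum>A\<leftarrow>As.
      mmul (mmul (lift_op J A) rho) (madj (lift_op J A)) x y)"

definition locally_recoverable ::
  "'n set \<Rightarrow> 'n set \<Rightarrow> ('n::finite, 'q::{finite,field}) qvec set \<Rightarrow> bool" where
  "locally_recoverable I J Q \<longleftrightarrow>
     (\<exists>As. (\<forall>rho. mtrace (kraus_map J As rho) = mtrace rho)
       \<and> (\<forall>\<phi>\<in>Q. kraus_map J As (Gamma I (ketbra \<phi>)) = ketbra \<phi>))"

end

theory Submission
  imports Defs "HOL-Number_Theory.Cong" "HOL-Computational_Algebra.Polynomial" "HOL-Computational_Algebra.Primes" "HOL-Library.FuncSet"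
begin

section \<open>Finite field facts\<close>

lemma char_pos: "CHAR('q::{finite,field}) > 0"
  by (rule finite_imp_CHAR_pos) simp

lemma char_prime: "prime CHAR('q::{finite,field})"
  using char_pos by (rule prime_CHAR_semidom)

lemma of_nat_mult_mem:
  fixes W :: "'q::{finite,field} set"
  assumes "0 \<in> W" "\<And>x y. x \<in> W \<Longrightarrow> y \<in> W \<Longrightarrow> x + y \<in> W" "y \<in> W"
  shows "of_nat n * y \<in> W"
  by (induction n) (auto simp: assms distrib_right)

lemma uminus_mem:
  fixes W :: "'q::{finite,field} set"
  assumes "0 \<in> W" "\<And>x y. x \<in> W \<Longrightarrow> y \<in> W \<Longrightarrow> x + y \<in> W" "y \<in> W"
  shows "- y \<in> W"
proof -
  have "of_nat (CHAR('q) - 1) * y \<in> W" by (rule of_nat_mult_mem[OF assms])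
  moreover have "of_nat (CHAR('q) - 1) = (-1::'q)"
  proof -
    have "of_nat (CHAR('q) - 1) + (1::'q) = of_nat CHAR('q)"
      using char_pos[where 'q='q] by (metis Suc_pred' of_nat_Suc add.commute)
    then show ?thesis by (simp add: eq_neg_iff_add_eq_0)
  qed
  ultimately show ?thesis by simp
qed

lemma addsub_card_power:
  fixes W :: "'q::{finite,field} set"
  assumes "0 \<in> W" "\<And>x y. x \<in> W \<Longrightarrow> y \<in> W \<Longrightarrow> x + y \<in> W"
  shows "\<exists>m. card (UNIV::'q set) = card W * CHAR('q) ^ m"
  using assms
proof (induction "card (UNIV::'q set) - card W" arbitrary: W rule: less_induct)
  case less
  define p where "p = CHAR('q)"
  have pp: "prime p" "p > 0" using char_prime char_pos unfolding p_def by auto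
  show ?case
  proof (cases "W = UNIV")
    case True then show ?thesis by (intro exI[of _ 0]) simp
  next
    case False
    then obtain x where x: "x \<notin> W" by auto
    define W' where "W' = (\<lambda>(w,k). w + of_nat k * x) ` (W \<times> {..<p})"
    have neg: "- y \<in> W" if "y \<in> W" for y using uminus_mem[OF less.prems that] .
    have mulW: "of_nat n * y \<in> W" if "y \<in> W" for y n using of_nat_mult_mem[OF less.prems that] .
    have inj: "inj_on (\<lambda>(w,k). w + of_nat k * x) (W \<times> {..<p})"
    proof (rule inj_onI)
      fix u v
      assume uv: "u \<in> W \<times> {..<p}" "v \<in> W \<times> {..<p}"
        "(\<lambda>(w,k). w + of_nat k * x) u = (\<lambda>(w,k). w + of_nat k * x) v"
      obtain w k where u: "u = (w, k)" by (cases u)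
      obtain w' k' where v: "v = (w', k')" by (cases v)
      have a: "w \<in> W" "k \<in> {..<p}" "w' \<in> W" "k' \<in> {..<p}" "w + of_nat k * x = w' + of_nat k' * x"
        using uv unfolding u v by auto
      have "k = k'"
      proof (rule ccontr)
        assume ne: "k \<noteq> k'"
        have main: "x \<in> W" if "w1 \<in> W" "w2 \<in> W" "k1 < p" "k2 < k1" "w1 + of_nat k1 * x = w2 + of_nat k2 * x" for w1 w2 k1 k2
        proof -
          have "of_nat (k1 - k2) * x = w2 + - w1"
            using that(4,5) by (simp add: of_nat_diff algebra_simps)
          have "w2 + - w1 \<in> W" using less.prems(2)[OF that(2) neg[OF that(1)]] .
          hence d: "of_nat (k1 - k2) * x \<in> W" using \<open>of_nat (k1 - k2) * x = w2 + - w1\<close> by simp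
          have "\<not> p dvd (k1 - k2)" using that(3,4) by (intro nat_dvd_not_less) auto
          hence "coprime p (k1 - k2)" by (rule prime_imp_coprime[OF pp(1)])
          hence "coprime (k1 - k2) p" by (simp add: coprime_commute)
          then obtain n where n: "[(k1 - k2) * n = Suc 0] (mod p)" using cong_solve_coprime_nat by blast
          have "of_nat ((k1 - k2) * n) = (of_nat (Suc 0) :: 'q)"
            using n unfolding p_def by (simp only: of_nat_eq_iff_cong_CHAR)
          hence "of_nat n * of_nat (k1 - k2) = (1::'q)" by (simp add: mult.commute)
          hence nx: "of_nat n * (of_nat (k1 - k2) * x) = x" by (simp add: mult.assoc[symmetric])
          from mulW[OF d, of n] show ?thesis unfolding nx .
        qed
        show False
        proof (cases "k < k'")
          case True thus False using main[of w' w k' k] a x by auto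
        next
          case False thus False using main[of w w' k k'] a x ne by auto
        qed
      qed
      with a show "u = v" unfolding u v by simp
    qed
    have cardW': "card W' = card W * p"
      unfolding W'_def by (simp add: card_image[OF inj] card_cartesian_product)
    have W'0: "0 \<in> W'" unfolding W'_def using less.prems pp by (auto intro!: image_eqI[of _ _ "(0,0)"])
    have W'add: "a + b \<in> W'" if "a \<in> W'" "b \<in> W'" for a b
    proof -
      from that obtain w k w' k' where ab: "w \<in> W" "k < p" "w' \<in> W" "k' < p"
        "a = w + of_nat k * x" "b = w' + of_nat k' * x" unfolding W'_def by auto
      have "of_nat ((k + k') mod p) = (of_nat (k + k') :: 'q)"
        unfolding p_def by (simp only: of_nat_eq_iff_cong_CHAR) (simp add: cong_def)
      hence "a + b = (w + w') + of_nat ((k + k') mod p) * x" using ab by (simp add: algebra_simps)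
      moreover have "(w + w', (k + k') mod p) \<in> W \<times> {..<p}" using ab less.prems pp by auto
      ultimately show ?thesis unfolding W'_def by force
    qed
    have "W \<subseteq> W'" unfolding W'_def using pp by (force intro!: image_eqI[of _ _ "(_,0)"])
    have cW: "card W > 0" using less.prems by (auto simp add: card_gt_0_iff)
    have "card W' > card W" using cardW' cW pp prime_gt_1_nat[OF pp(1)] by simp
    moreover have "card W' \<le> card (UNIV::'q set)" by (simp add: card_mono)
    ultimately have "card (UNIV::'q set) - card W' < card (UNIV::'q set) - card W" by linarith
    from less.hyps[OF this W'0 W'add] obtain m where "card (UNIV::'q set) = card W' * CHAR('q) ^ m" by blast
    thus ?thesis using cardW' unfolding p_def by (intro exI[of _ "Suc m"]) (simp add: algebra_simps)
  qed
qed

lemma card_field_power: "\<exists>m. m > 0 \<and> card (UNIV::'q::{finite,field} set) = CHAR('q) ^ m"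
proof -
  obtain m where m: "card (UNIV::'q set) = card {0::'q} * CHAR('q) ^ m"
    using addsub_card_power[of "{0::'q}"] by auto
  have "m > 0"
  proof (rule ccontr)
    assume "\<not> m > 0"
    hence "card (UNIV::'q set) = 1" using m by simp
    moreover have "card {0::'q, 1} \<le> card (UNIV::'q set)" by (rule card_mono) auto
    ultimately show False by simp
  qed
  thus ?thesis using m by auto
qed

lemma fdeg_prop: "fdeg TYPE('q::{finite,field}) > 0 \<and> card (UNIV::'q set) = CHAR('q) ^ fdeg TYPE('q)"
  unfolding fdeg_def using card_field_power[where 'q='q] by (rule LeastI_ex)

lemma power_card_eq: "(x::'q::{finite,field}) ^ card (UNIV::'q set) = x"
proof (cases "x = 0")
  case False
  have "x * (\<Prod>y\<in>UNIV-{0}. x * y) = x * x ^ (card (UNIV :: 'q set) - 1) * \<Prod>(UNIV-{0})"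
    by (simp add: prod.distrib mult_ac)
  also have "x * x ^ (card (UNIV :: 'q set) - 1) = x ^ Suc (card (UNIV :: 'q set) - 1)"
    by (subst power_Suc) auto
  also have "Suc (card (UNIV :: 'q set) - 1) = card (UNIV :: 'q set)"
    using finite_UNIV_card_ge_0[where ?'a = 'q] by simp
  also have "(\<Prod>y\<in>UNIV-{0}. x * y) = (\<Prod>y\<in>UNIV-{0}. y)"
    by (rule prod.reindex_bij_witness[of _ "\<lambda>y. y / x" "\<lambda>y. x * y"]) (use False in auto)
  finally show ?thesis
    by simp
qed (use finite_UNIV_card_ge_0[where ?'a = 'q] in auto)

lemma ftrace_add: "ftrace (x + y) = ftrace x + ftrace (y::'q::{finite,field})"
  unfolding ftrace_def
  by (simp add: freshmans_dream'[OF char_prime refl] sum.distrib)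

lemma ftrace_pow: "ftrace (x::'q::{finite,field}) ^ CHAR('q) = ftrace x"
proof -
  define m where "m = fdeg TYPE('q)"
  define p where "p = CHAR('q)"
  have m: "m > 0" "card (UNIV::'q set) = p ^ m" using fdeg_prop[where 'q='q] unfolding m_def p_def by auto
  have "ftrace x ^ p = (\<Sum>i<m. (x ^ (p ^ i)) ^ p)"
    unfolding ftrace_def m_def p_def by (rule freshmans_dream_sum[OF char_prime refl])
  also have "\<dots> = (\<Sum>i<m. x ^ (p ^ Suc i))" by (simp add: power_mult[symmetric] mult.commute)
  also have "\<dots> = (\<Sum>i<m. x ^ (p ^ i))"
  proof -
    have e1: "(\<Sum>i<Suc m. x ^ (p ^ i)) = (\<Sum>i<m. x ^ (p ^ i)) + x ^ (p ^ m)" by (rule sum.lessThan_Suc)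
    have e2: "(\<Sum>i<Suc m. x ^ (p ^ i)) = x ^ (p ^ 0) + (\<Sum>i<m. x ^ (p ^ Suc i))" by (rule sum.lessThan_Suc_shift)
    have e3: "x ^ (p ^ m) = x" using power_card_eq[of x] m by simp
    have e4: "x ^ (p ^ 0) = x" by simp
    from e1 e2 e3 e4 have "x + (\<Sum>i<m. x ^ (p ^ Suc i)) = x + (\<Sum>i<m. x ^ (p ^ i))" by (simp only: add.commute)
    thus ?thesis by (rule add_left_imp_eq)
  qed
  finally show ?thesis unfolding ftrace_def m_def p_def .
qed

lemma fermat_of_nat: "(of_nat k :: 'q::{finite,field}) ^ CHAR('q) = of_nat k"
  by (induction k) (simp_all add: freshmans_dream[OF char_prime refl] char_pos)

lemma prime_field_roots: 
  assumes "(y::'q::{finite,field}) ^ CHAR('q) = y"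
  shows "\<exists>k < CHAR('q). of_nat k = y"
proof -
  define p where "p = CHAR('q)"
  have p: "p \<ge> 2" using char_prime unfolding p_def using prime_ge_2_nat by blast
  define P where "P = monom (1::'q) p + [:0, -1:]"
  have degP: "degree P = p" unfolding P_def using p
    by (subst degree_add_eq_left) (auto simp: degree_monom_eq)
  hence P0: "P \<noteq> 0" using p by auto
  have rootsP: "{x. poly P x = 0} = {x. x ^ p = x}" unfolding P_def by (auto simp: poly_monom)
  have inj: "inj_on (of_nat :: nat \<Rightarrow> 'q) {..<p}"
    by (rule inj_onI) (auto simp: p_def of_nat_eq_iff_cong_CHAR cong_def)
  have sub: "of_nat ` {..<p} \<subseteq> {x::'q. x ^ p = x}" using fermat_of_nat unfolding p_def by auto
  have "card {x::'q. x ^ p = x} \<le> p" using card_poly_roots_bound[OF P0] degP rootsP by simp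
  moreover have "card (of_nat ` {..<p} :: 'q set) = p" using card_image[OF inj] by simp
  moreover have "card (of_nat ` {..<p} :: 'q set) \<le> card {x::'q. x ^ p = x}"
    by (rule card_mono[OF _ sub]) simp
  ultimately have "of_nat ` {..<p} = {x::'q. x ^ p = x}"
    using sub by (intro card_subset_eq) auto
  thus ?thesis using assms unfolding p_def by (metis (mono_tags, lifting) imageE lessThan_iff mem_Collect_eq)
qed

definition tk :: "'q::{finite,field} \<Rightarrow> nat" where
  "tk t = (THE k. k < CHAR('q) \<and> of_nat k = ftrace t)"

lemma tk_prop: "tk t < CHAR('q) \<and> of_nat (tk t) = ftrace (t::'q::{finite,field})"
proof -
  obtain k where k: "k < CHAR('q)" "of_nat k = ftrace t" using prime_field_roots[OF ftrace_pow] by blast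
  have "\<exists>!k. k < CHAR('q) \<and> of_nat k = ftrace t"
  proof (rule ex1I[of _ k])
    fix k' assume "k' < CHAR('q) \<and> of_nat k' = ftrace t"
    hence "[k' = k] (mod CHAR('q))" using k by (simp add: of_nat_eq_iff_cong_CHAR[symmetric])
    thus "k' = k" using k \<open>k' < CHAR('q) \<and> _\<close> by (simp add: cong_def)
  qed (use k in auto)
  thus ?thesis unfolding tk_def by (rule theI')
qed

lemma chi_tk: "chi t = xi TYPE('q) ^ tk (t::'q::{finite,field})"
  unfolding chi_def tk_def ..

lemma xi_pow_char: "xi TYPE('q::{finite,field}) ^ CHAR('q) = 1"
proof -
  have "xi TYPE('q) ^ CHAR('q) = cis (real CHAR('q) * (2 * pi / real CHAR('q)))"
    unfolding xi_def by (rule DeMoivre)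
  also have "\<dots> = 1" using char_pos[where 'q='q] by simp
  finally show ?thesis .
qed

lemma xi_pow_mod: "xi TYPE('q::{finite,field}) ^ n = xi TYPE('q) ^ (n mod CHAR('q))"
proof -
  have "xi TYPE('q) ^ n = xi TYPE('q) ^ (CHAR('q) * (n div CHAR('q)) + n mod CHAR('q))" by (simp add: mult_div_mod_eq)
  also have "\<dots> = (xi TYPE('q) ^ CHAR('q)) ^ (n div CHAR('q)) * xi TYPE('q) ^ (n mod CHAR('q))" by (simp only: power_add power_mult)
  also have "\<dots> = xi TYPE('q) ^ (n mod CHAR('q))" by (simp add: xi_pow_char)
  finally show ?thesis .
qed

lemma chi_add: "chi (s + t) = chi s * chi (t::'q::{finite,field})"
proof -
  have "of_nat (tk (s + t)) = (of_nat (tk s + tk t) :: 'q)"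
    using tk_prop[of s] tk_prop[of t] tk_prop[of "s+t"] by (simp add: ftrace_add)
  hence "[tk (s + t) = tk s + tk t] (mod CHAR('q))" by (simp only: of_nat_eq_iff_cong_CHAR)
  hence "xi TYPE('q) ^ tk (s + t) = xi TYPE('q) ^ (tk s + tk t)"
    by (metis cong_def xi_pow_mod)
  thus ?thesis by (simp add: chi_tk power_add)
qed

lemma norm_xi: "norm (xi TYPE('q::{finite,field})) = 1"
  unfolding xi_def by simp

lemma norm_chi: "norm (chi (t::'q::{finite,field})) = 1"
  by (simp add: chi_tk norm_power norm_xi)

lemma chi_zero: "chi (0::'q::{finite,field}) = 1"
proof -
  have h0: "chi (0 + 0::'q) = chi (0::'q) * chi (0::'q)" by (rule chi_add)
  have h: "chi (0::'q) = chi (0::'q) * chi (0::'q)" using h0 by simp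
  have nz: "chi (0::'q) \<noteq> 0" using norm_chi[of "0::'q"] by auto
  have "chi (0::'q) * chi (0::'q) = chi (0::'q) * 1" using h by simp
  thus ?thesis using mult_left_cancel[OF nz] by blast
qed

lemma chi_cnj_mult: "cnj (chi t) * chi (t::'q::{finite,field}) = 1"
  using norm_chi[of t] by (metis complex_norm_square mult.commute of_real_1 power_one)

lemma chi_uminus: "chi (- t) = cnj (chi (t::'q::{finite,field}))"
proof -
  have "chi (- t) * chi t = chi (- t + t)" by (simp only: chi_add)
  hence "chi (- t) * chi t = 1" by (simp add: chi_zero)
  thus ?thesis using chi_cnj_mult[of t]
    by (metis mult_cancel_right mult_zero_left zero_neq_one)
qed

lemma chi_sum: "finite A \<Longrightarrow> chi (\<Sum>a\<in>A. f a) = (\<Prod>a\<in>A. chi (f a :: 'q::{finite,field}))"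
  by (induction A rule: finite_induct) (simp_all add: chi_zero chi_add)

lemma ftrace_nontrivial: "\<exists>u::'q::{finite,field}. ftrace u \<noteq> 0"
proof (rule ccontr)
  assume "\<not> (\<exists>u::'q. ftrace u \<noteq> 0)"
  hence all0: "\<forall>u::'q. ftrace u = 0" by simp
  define m where "m = fdeg TYPE('q)"
  define p where "p = CHAR('q)"
  have m: "m > 0" "card (UNIV::'q set) = p ^ m" using fdeg_prop[where 'q='q] unfolding m_def p_def by auto
  have p2: "p \<ge> 2" using char_prime unfolding p_def using prime_ge_2_nat by blast
  define T where "T = (\<Sum>i<m. monom (1::'q) (p ^ i))"
  have polyT: "poly T u = ftrace u" for u unfolding T_def ftrace_def m_def p_def by (simp add: poly_sum poly_monom)
  have "coeff T 1 = (\<Sum>i<m. if p ^ i = 1 then 1 else 0)" unfolding T_def by (simp add: coeff_sum coeff_monom)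
  also have "\<dots> = (\<Sum>i\<in>{0}. if p ^ i = 1 then 1 else 0)"
    using m p2 by (intro sum.mono_neutral_right) auto
  finally have "coeff T 1 = 1" by simp
  hence T0: "T \<noteq> 0" by auto
  have "degree T \<le> p ^ (m - 1)" unfolding T_def
    by (rule degree_sum_le) (use p2 in \<open>auto intro!: order.trans[OF degree_monom_le] power_increasing\<close>)
  also have "\<dots> < p ^ m" using m p2 by (intro power_strict_increasing) auto
  finally have "degree T < card (UNIV::'q set)" using m by simp
  moreover have "{x. poly T x = 0} = UNIV" using all0 polyT by auto
  ultimately show False using card_poly_roots_bound[OF T0] by simp
qed

lemma chi_nontrivial: "\<exists>u::'q::{finite,field}. chi u \<noteq> 1"
proof -
  obtain u :: 'q where u: "ftrace u \<noteq> 0" using ftrace_nontrivial by blast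
  have k1: "tk u < CHAR('q)" using tk_prop[of u] by simp
  have k2: "tk u \<noteq> 0"
  proof
    assume "tk u = 0"
    hence "ftrace u = of_nat 0" using tk_prop[of u] by simp
    thus False using u by simp
  qed
  note k = k1 k2
  have "chi u \<noteq> 1"
  proof
    assume "chi u = 1"
    hence "cis (real (tk u) * (2 * pi / real CHAR('q))) = 1"
      by (simp add: chi_tk xi_def DeMoivre)
    hence c: "cos (real (tk u) * (2 * pi / real CHAR('q))) = 1" by (metis cis.sel(1) one_complex.sel(1))
    obtain n :: int where "real (tk u) * (2 * pi / real CHAR('q)) = 2 * pi * n"
      using cos_one_2pi_int[THEN iffD1, OF c] by (auto simp: mult.commute)
    hence "real (tk u) = real CHAR('q) * n" using char_pos[where 'q='q] by (simp add: field_simps)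
    hence eq: "real (tk u) = real CHAR('q) * n" .
    have cp: "real CHAR('q) > 0" using char_pos[where 'q='q] by simp
    have "real CHAR('q) * 0 < real CHAR('q) * n" using eq k by simp
    hence "0 < n" using cp by (simp only: mult_less_cancel_left_pos of_int_pos)
    moreover have lt: "real (tk u) < real CHAR('q)" using k1 by simp
    have "real CHAR('q) * n < real CHAR('q) * 1" using lt unfolding eq by simp
    hence "real_of_int n < 1" using cp by (simp only: mult_less_cancel_left_pos)
    hence "n < 1" by simp
    ultimately show False by simp
  qed
  thus ?thesis by blast
qed


section \<open>Matrix algebra\<close>

definition msum :: "'i set \<Rightarrow> ('i \<Rightarrow> ('n, 'q) qmat) \<Rightarrow> ('n, 'q) qmat" where
  "msum S f = (\<lambda>x y. \<Sum>i\<in>S. f i x y)"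

definition mdiff :: "('n, 'q) qmat \<Rightarrow> ('n, 'q) qmat \<Rightarrow> ('n, 'q) qmat" where
  "mdiff A B = (\<lambda>x y. A x y - B x y)"

definition madd :: "('n, 'q) qmat \<Rightarrow> ('n, 'q) qmat \<Rightarrow> ('n, 'q) qmat" where
  "madd A B = (\<lambda>x y. A x y + B x y)"

lemma mmul_assoc: "mmul (mmul A B) C = mmul A (mmul B C)"
  unfolding mmul_def
  apply (intro ext)
  apply (simp add: sum_distrib_left sum_distrib_right mult.assoc)
  apply (rule sum.swap)
  done

lemma if_one_mult [simp]: "(if P then (1::complex) else 0) * a = (if P then a else 0)"
  by simp

lemma mult_if_one [simp]: "a * (if P then (1::complex) else 0) = (if P then a else 0)"
  by simp

lemma mmul_mid_left [simp]: "mmul mid A = A"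
  unfolding mmul_def mid_def by (intro ext) simp

lemma mmul_mid_right [simp]: "mmul A mid = A"
  unfolding mmul_def mid_def by (intro ext) simp

lemma madj_mmul: "madj (mmul A B) = mmul (madj B) (madj A)"
  unfolding mmul_def madj_def by (intro ext) (simp add: mult.commute)

lemma madj_madj [simp]: "madj (madj A) = A"
  unfolding madj_def by simp

lemma madj_mid [simp]: "madj mid = mid"
  unfolding madj_def mid_def by (intro ext) auto

lemma mmul_mscale_left: "mmul (mscale c A) B = mscale c (mmul A B)"
  unfolding mmul_def mscale_def by (intro ext) (simp add: sum_distrib_left mult.assoc)

lemma mmul_mscale_right: "mmul A (mscale c B) = mscale c (mmul A B)"
  unfolding mmul_def mscale_def by (intro ext) (simp add: sum_distrib_left mult.left_commute)

lemma madj_mscale: "madj (mscale c A) = mscale (cnj c) (madj A)"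
  unfolding madj_def mscale_def by simp

lemma mscale_mscale: "mscale a (mscale b A) = mscale (a * b) A"
  unfolding mscale_def by (simp add: mult.assoc)

lemma mscale_1 [simp]: "mscale 1 A = A"
  unfolding mscale_def by simp

lemma mtrace_mmul_comm: "mtrace (mmul A B) = mtrace (mmul B A)"
  unfolding mtrace_def mmul_def by (subst sum.swap) (simp add: mult.commute)

lemma mtrace_mscale: "mtrace (mscale c A) = c * mtrace A"
  unfolding mtrace_def mscale_def by (simp add: sum_distrib_left)

lemma mtrace_msum: "mtrace (msum S f) = (\<Sum>i\<in>S. mtrace (f i))"
  unfolding mtrace_def msum_def by (rule sum.swap)

lemma mmul_msum_left: "mmul (msum S f) B = msum S (\<lambda>i. mmul (f i) B)"
  unfolding mmul_def msum_def apply (intro ext) apply (simp add: sum_distrib_right) by (rule sum.swap)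

lemma mmul_msum_right: "mmul A (msum S f) = msum S (\<lambda>i. mmul A (f i))"
  unfolding mmul_def msum_def apply (intro ext) apply (simp add: sum_distrib_left) by (rule sum.swap)

lemma madj_msum: "madj (msum S f) = msum S (\<lambda>i. madj (f i))"
  unfolding madj_def msum_def by (intro ext) simp

lemma mscale_msum: "mscale c (msum S f) = msum S (\<lambda>i. mscale c (f i))"
  unfolding mscale_def msum_def by (intro ext) (simp add: sum_distrib_left)

lemma msum_mscale: "msum S (\<lambda>i. mscale (g i) A) = mscale (\<Sum>i\<in>S. g i) A"
  unfolding mscale_def msum_def by (intro ext) (simp add: sum_distrib_right)

lemma msum_cong: "(\<And>i. i \<in> S \<Longrightarrow> f i = g i) \<Longrightarrow> msum S f = msum S g"
  unfolding msum_def by (intro ext sum.cong) auto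

lemma msum_reindex_bij: "bij_betw h S T \<Longrightarrow> msum T f = msum S (\<lambda>i. f (h i))"
  unfolding msum_def apply (intro ext) by (rule sum.reindex_bij_betw[symmetric])

lemma msum_swap: "msum S (\<lambda>i. msum T (\<lambda>j. f i j)) = msum T (\<lambda>j. msum S (\<lambda>i. f i j))"
  unfolding msum_def by (intro ext) (rule sum.swap)

lemma mmul_madd_left: "mmul (madd A B) C = madd (mmul A C) (mmul B C)"
  unfolding mmul_def madd_def by (intro ext) (simp add: distrib_right sum.distrib)

lemma mmul_madd_right: "mmul C (madd A B) = madd (mmul C A) (mmul C B)"
  unfolding mmul_def madd_def by (intro ext) (simp add: distrib_left sum.distrib)

lemma mmul_mdiff_left: "mmul (mdiff A B) C = mdiff (mmul A C) (mmul B C)"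
  unfolding mmul_def mdiff_def by (intro ext) (simp add: left_diff_distrib sum_subtractf)

lemma mmul_mdiff_right: "mmul C (mdiff A B) = mdiff (mmul C A) (mmul C B)"
  unfolding mmul_def mdiff_def by (intro ext) (simp add: right_diff_distrib sum_subtractf)

lemma madj_mdiff: "madj (mdiff A B) = mdiff (madj A) (madj B)"
  unfolding madj_def mdiff_def by simp

lemma mtrace_mdiff: "mtrace (mdiff A B) = mtrace A - mtrace B"
  unfolding mtrace_def mdiff_def by (simp add: sum_subtractf)

lemma mtrace_madd: "mtrace (madd A B) = mtrace A + mtrace B"
  unfolding mtrace_def madd_def by (simp add: sum.distrib)

lemma mapply_mmul: "mapply (mmul A B) v = mapply A (mapply B v)"
  unfolding mapply_def mmul_def
  apply (intro ext)
  apply (simp add: sum_distrib_left sum_distrib_right mult.assoc)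
  by (rule sum.swap)

lemma mapply_mid [simp]: "mapply mid v = v"
  unfolding mapply_def mid_def by (intro ext) simp

lemma mapply_mscale: "mapply (mscale c A) v = (\<lambda>x. c * mapply A v x)"
  unfolding mapply_def mscale_def by (intro ext) (simp add: sum_distrib_left mult.assoc)

lemma mapply_msum: "mapply (msum S f) v = (\<lambda>x. \<Sum>i\<in>S. mapply (f i) v x)"
  unfolding mapply_def msum_def apply (intro ext) apply (simp add: sum_distrib_right) by (rule sum.swap)

lemma mapply_lin: "mapply A (\<lambda>x. a * u x + b * v x) = (\<lambda>x. a * mapply A u x + b * mapply A v x)"
  unfolding mapply_def by (intro ext) (simp add: sum.distrib sum_distrib_left algebra_simps)

lemma mapply_scale: "mapply A (\<lambda>x. a * u x) = (\<lambda>x. a * mapply A u x)"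
  unfolding mapply_def by (intro ext) (simp add: sum_distrib_left algebra_simps)

lemma ketbra_conj: "mmul (mmul M (ketbra v)) (madj M) = ketbra (mapply M v)"
  unfolding mmul_def ketbra_def madj_def mapply_def
  apply (intro ext)
  apply (simp add: sum_distrib_left sum_distrib_right mult.assoc)
  apply (simp add: mult_ac)
  done

lemma ketbra_scale: "ketbra (\<lambda>x. a * v x) = mscale (a * cnj a) (ketbra v)"
  unfolding ketbra_def mscale_def by (intro ext) (simp add: mult_ac)

lemma mtrace_ketbra: "mtrace (ketbra v) = (\<Sum>x\<in>UNIV. of_real ((norm (v x))\<^sup>2))"
  unfolding mtrace_def ketbra_def by (simp only: complex_norm_square)


section \<open>Symplectic vectors\<close>

definition dot :: "('n::finite \<Rightarrow> 'q::field) \<Rightarrow> ('n \<Rightarrow> 'q) \<Rightarrow> 'q" where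
  "dot a b = (\<Sum>j\<in>UNIV. a j * b j)"

definition szero :: "('n, 'q::field) svec" where
  "szero = (\<lambda>_. 0, \<lambda>_. 0)"

definition sneg :: "('n, 'q::field) svec \<Rightarrow> ('n, 'q) svec" where
  "sneg u = (\<lambda>j. - fst u j, \<lambda>j. - snd u j)"

lemma svec_eqI: "fst u = fst v \<Longrightarrow> snd u = snd v \<Longrightarrow> u = v"
  by (simp add: prod_eq_iff)

lemma sadd_szero [simp]: "sadd u szero = u" "sadd szero u = u"
  unfolding sadd_def szero_def by simp_all

lemma sadd_comm: "sadd u v = sadd v u"
  unfolding sadd_def by (simp add: add.commute)

lemma sadd_assoc: "sadd (sadd u v) w = sadd u (sadd v w)"
  unfolding sadd_def by (simp add: add.assoc)

lemma sadd_sneg [simp]: "sadd u (sneg u) = szero" "sadd (sneg u) u = szero"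
  unfolding sadd_def sneg_def szero_def by simp_all

lemma fst_sneg [simp]: "fst (sneg u) = (\<lambda>j. - fst u j)" and snd_sneg [simp]: "snd (sneg u) = (\<lambda>j. - snd u j)"
  unfolding sneg_def by simp_all

lemma sneg_sneg [simp]: "sneg (sneg u) = u"
  unfolding sneg_def by simp

lemma sneg_scale: "sneg u = sscale (-1) u"
  unfolding sneg_def sscale_def by simp

lemma sscale_0 [simp]: "sscale 0 u = szero"
  unfolding sscale_def szero_def by simp

lemma sscale_1 [simp]: "sscale 1 u = u"
  unfolding sscale_def by simp

lemma sscale_szero [simp]: "sscale c szero = szero"
  unfolding sscale_def szero_def by simp

lemma sadd_sscale_Suc: "sadd u (sscale (of_nat k) u) = sscale (of_nat (Suc k)) u"
  unfolding sadd_def sscale_def by (simp add: algebra_simps)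

lemma symp_sadd_right: "symp u (sadd v w) = symp u v + symp u w"
  unfolding symp_def sadd_def by (simp add: distrib_left sum.distrib)

lemma symp_sadd_left: "symp (sadd v w) u = symp v u + symp w u"
  unfolding symp_def sadd_def by (simp add: distrib_right sum.distrib)

lemma symp_sscale_right: "symp u (sscale c v) = c * symp u v"
  unfolding symp_def sscale_def by (simp add: sum_distrib_left right_diff_distrib mult.left_commute)

lemma symp_sscale_left: "symp (sscale c v) u = c * symp v u"
  unfolding symp_def sscale_def by (simp add: sum_distrib_left right_diff_distrib mult.assoc)

lemma symp_antisym: "symp u v = - symp v u"
  unfolding symp_def by (simp add: mult.commute)

lemma symp_szero [simp]: "symp u szero = 0" "symp szero u = 0"
  unfolding symp_def szero_def by simp_all

lemma symp_sneg_left: "symp (sneg u) v = - symp u v"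
  unfolding symp_def sneg_def by (simp add: sum_negf)

lemma symp_sneg_right: "symp v (sneg u) = - symp v u"
  unfolding symp_def sneg_def by (simp add: sum_negf)

lemma linear_codeD:
  assumes "linear_code W"
  shows "szero \<in> W" "\<And>u v. u \<in> W \<Longrightarrow> v \<in> W \<Longrightarrow> sadd u v \<in> W"
    "\<And>c u. u \<in> W \<Longrightarrow> sscale c u \<in> W" "\<And>u. u \<in> W \<Longrightarrow> sneg u \<in> W"
  using assms unfolding linear_code_def szero_def sneg_scale by auto

lemma linear_codeI:
  assumes "szero \<in> W" "\<And>u v. u \<in> W \<Longrightarrow> v \<in> W \<Longrightarrow> sadd u v \<in> W"
    "\<And>c u. u \<in> W \<Longrightarrow> sscale c u \<in> W"
  shows "linear_code W"
  using assms unfolding linear_code_def szero_def by auto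

section \<open>Vanishing sums\<close>

lemma bij_betwI2:
  assumes "\<And>x. x \<in> A \<Longrightarrow> f x \<in> B" "\<And>y. y \<in> B \<Longrightarrow> g y \<in> A"
    "\<And>x. x \<in> A \<Longrightarrow> g (f x) = x" "\<And>y. y \<in> B \<Longrightarrow> f (g y) = y"
  shows "bij_betw f A B"
  by (rule bij_betw_byWitness[where f' = g]) (use assms in auto)

lemma sum_shift_zero:
  fixes f :: "'a \<Rightarrow> complex"
  assumes "bij_betw h S S" "\<And>x. x \<in> S \<Longrightarrow> f (h x) = c * f x" "c \<noteq> 1"
  shows "sum f S = 0"
proof -
  have "sum f S = sum (\<lambda>x. f (h x)) S" using sum.reindex_bij_betw[OF assms(1), of f] by simp
  also have "\<dots> = c * sum f S" using assms(2) by (simp add: sum_distrib_left)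
  finally have "(1 - c) * sum f S = 0" by (simp add: algebra_simps)
  thus ?thesis using assms(3) by simp
qed

lemma chi_exists_scaled:
  assumes "(t::'q::{finite,field}) \<noteq> 0"
  shows "\<exists>s. chi (s * t) \<noteq> 1"
proof -
  obtain u :: 'q where u: "chi u \<noteq> 1" using chi_nontrivial by blast
  have "chi ((u / t) * t) \<noteq> 1" using u assms by simp
  thus ?thesis by blast
qed

lemma char_sum_subspace:
  fixes W :: "('n::finite, 'q::{finite,field}) svec set"
  assumes "linear_code W"
  shows "(\<Sum>w\<in>W. chi (symp v w)) = (if (\<forall>w\<in>W. symp v w = 0) then of_nat (card W) else 0)"
proof (cases "\<forall>w\<in>W. symp v w = 0")
  case True thus ?thesis by (simp add: chi_zero)
next
  case False
  then obtain w0 where w0: "w0 \<in> W" "symp v w0 \<noteq> 0" by blast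
  obtain s where s: "chi (s * symp v w0) \<noteq> 1" using chi_exists_scaled[OF w0(2)] by blast
  define w1 where "w1 = sscale s w0"
  have w1: "w1 \<in> W" unfolding w1_def using linear_codeD(3)[OF assms w0(1)] .
  have "(\<Sum>w\<in>W. chi (symp v w)) = 0"
  proof (rule sum_shift_zero[where h = "\<lambda>w. sadd w w1"])
    show "bij_betw (\<lambda>w. sadd w w1) W W"
      by (rule bij_betwI2[where g = "\<lambda>w. sadd w (sneg w1)"])
         (auto simp: linear_codeD[OF assms] w1 sadd_assoc)
    show "chi (symp v (sadd w w1)) = chi (s * symp v w0) * chi (symp v w)" for w
      by (simp add: symp_sadd_right chi_add w1_def symp_sscale_right mult.commute)
  qed (use s in auto)
  thus ?thesis using False by (subst if_not_P) auto
qed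

section \<open>Pauli operators\<close>

lemma pauliE_apply: "pauliE y x' x = (if x' = (\<lambda>j. x j + fst y j) then chi (dot (snd y) x) else 0)"
  unfolding pauliE_def dot_def ..

lemma sum_delta_mult:
  fixes f :: "'a::finite \<Rightarrow> complex"
  shows "(\<Sum>z\<in>UNIV. f z * (if z = t then c else 0)) = f t * (c::complex)"
proof -
  have "(\<Sum>z\<in>UNIV. f z * (if z = t then c else 0)) = (\<Sum>z\<in>UNIV. if z = t then f t * c else 0)"
    by (rule sum.cong) auto
  also have "\<dots> = f t * c" by simp
  finally show ?thesis .
qed

lemma dot_add_right: "dot a (\<lambda>j. b j + c j) = dot a b + dot a c"
  unfolding dot_def by (simp add: distrib_left sum.distrib)

lemma dot_add_left: "dot (\<lambda>j. a j + b j) c = dot a c + dot b c"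
  unfolding dot_def by (simp add: distrib_right sum.distrib)

lemma dot_diff_right: "dot a (\<lambda>j. b j - c j) = dot a b - dot a c"
  unfolding dot_def by (simp add: right_diff_distrib sum_subtractf)

lemma dot_neg_left: "dot (\<lambda>j. - a j) c = - dot a c"
  unfolding dot_def by (simp add: sum_negf)

lemma dot_neg_right: "dot a (\<lambda>j. - c j) = - dot a c"
  unfolding dot_def by (simp add: sum_negf)

lemma pauliE_mult:
  "mmul (pauliE u) (pauliE v) = mscale (chi (dot (snd u) (fst v))) (pauliE (sadd u v))"
proof (intro ext)
  fix x' x :: "'a \<Rightarrow> 'b"
  define t where "t = (\<lambda>j. x j + fst v j)"
  have "mmul (pauliE u) (pauliE v) x' x = (\<Sum>z\<in>UNIV. pauliE u x' z * (if z = t then chi (dot (snd v) x) else 0))"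
    unfolding mmul_def pauliE_apply t_def ..
  also have "\<dots> = pauliE u x' t * chi (dot (snd v) x)" by (rule sum_delta_mult)
  also have "\<dots> = mscale (chi (dot (snd u) (fst v))) (pauliE (sadd u v)) x' x"
  proof -
    have c: "(x' = (\<lambda>j. t j + fst u j)) = (x' = (\<lambda>j. x j + fst (sadd u v) j))"
      unfolding t_def sadd_def by (simp add: add_ac)
    have "chi (dot (snd u) t) * chi (dot (snd v) x) = chi (dot (snd u) (fst v)) * chi (dot (snd (sadd u v)) x)"
      unfolding t_def sadd_def by (simp add: dot_add_right dot_add_left chi_add mult_ac)
    thus ?thesis unfolding mscale_def pauliE_apply c by simp
  qed
  finally show "mmul (pauliE u) (pauliE v) x' x = mscale (chi (dot (snd u) (fst v))) (pauliE (sadd u v)) x' x" .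
qed

lemma pauliE_szero [simp]: "pauliE (szero :: ('n::finite, 'q::{finite,field}) svec) = mid"
  unfolding pauliE_apply[abs_def] szero_def mid_def dot_def by (intro ext) (simp add: chi_zero)

lemma madj_pauliE: "madj (pauliE u) = mscale (chi (dot (snd u) (fst u))) (pauliE (sneg u))"
proof (intro ext)
  fix x' x :: "'a \<Rightarrow> 'b"
  have c: "(x = (\<lambda>j. x' j + fst u j)) = (x' = (\<lambda>j. x j + fst (sneg u) j))"
    unfolding sneg_def by (auto simp: algebra_simps)
  have "x' = (\<lambda>j. x j + fst (sneg u) j) \<Longrightarrow>
      cnj (chi (dot (snd u) x')) = chi (dot (snd u) (fst u)) * chi (dot (snd (sneg u)) x)"
  proof -
    assume x': "x' = (\<lambda>j. x j + fst (sneg u) j)"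
    have "cnj (chi (dot (snd u) x')) = chi (- dot (snd u) x')" by (simp add: chi_uminus)
    also have "- dot (snd u) x' = dot (snd u) (fst u) + dot (snd (sneg u)) x"
      unfolding x' sneg_def by (simp add: dot_add_right dot_neg_right dot_neg_left dot_diff_right)
    finally show ?thesis by (simp add: chi_add)
  qed
  thus "madj (pauliE u) x' x = mscale (chi (dot (snd u) (fst u))) (pauliE (sneg u)) x' x"
    unfolding madj_def mscale_def pauliE_apply c by simp
qed

lemma pauliE_unitary:
  "mmul (madj (pauliE u)) (pauliE u) = mid" "mmul (pauliE u) (madj (pauliE u)) = mid"
proof -
  have "chi (dot (snd u) (fst u)) * chi (dot (snd (sneg u)) (fst u)) = 1"
    unfolding sneg_def by (simp add: dot_neg_left chi_uminus[symmetric] chi_add[symmetric] chi_zero)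
  thus "mmul (madj (pauliE u)) (pauliE u) = mid"
    by (simp add: madj_pauliE mmul_mscale_left pauliE_mult mscale_mscale)
  have "chi (dot (snd u) (fst u)) * chi (dot (snd u) (fst (sneg u))) = 1"
    unfolding sneg_def by (simp add: dot_neg_right chi_uminus[symmetric] chi_add[symmetric] chi_zero)
  thus "mmul (pauliE u) (madj (pauliE u)) = mid"
    by (simp add: madj_pauliE mmul_mscale_right pauliE_mult mscale_mscale)
qed

lemma symp_dot: "symp u v = dot (fst u) (snd v) - dot (snd u) (fst v)"
  unfolding symp_def dot_def ..

lemma dot_comm: "dot a b = dot b a"
  unfolding dot_def by (simp add: mult.commute)

lemma pauliE_commute:
  "mmul (pauliE u) (pauliE v) = mscale (chi (symp v u)) (mmul (pauliE v) (pauliE u))"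
proof -
  have s: "sadd v u = sadd u v" by (rule sadd_comm)
  have "chi (dot (snd u) (fst v)) = chi (symp v u) * chi (dot (snd v) (fst u))"
    by (simp add: symp_dot chi_add[symmetric] dot_comm)
  thus ?thesis by (simp add: pauliE_mult mscale_mscale s)
qed

lemma dot_update: "dot b (x(j0 := x j0 + t)) = dot b x + b j0 * t"
proof -
  have "x(j0 := x j0 + t) = (\<lambda>j. x j + (if j = j0 then t else 0))" by auto
  hence "dot b (x(j0 := x j0 + t)) = dot b x + dot b (\<lambda>j. if j = j0 then t else 0)"
    by (simp add: dot_add_right)
  also have "dot b (\<lambda>j. if j = j0 then t else 0) = b j0 * t"
    unfolding dot_def by (simp add: if_distrib[of "\<lambda>z. b _ * z"] cong: if_cong)
  finally show ?thesis .
qed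

lemma char_sum_dot:
  fixes b :: "'n::finite \<Rightarrow> 'q::{finite,field}"
  assumes "b \<noteq> (\<lambda>_. 0)"
  shows "(\<Sum>x\<in>UNIV. chi (dot b x)) = 0"
proof -
  obtain j0 where j0: "b j0 \<noteq> 0" using assms by auto
  obtain s where s: "chi (s * b j0) \<noteq> 1" using chi_exists_scaled[OF j0] by blast
  show ?thesis
  proof (rule sum_shift_zero[where h = "\<lambda>x. x(j0 := x j0 + s)"])
    show "bij_betw (\<lambda>x. x(j0 := x j0 + s)) UNIV UNIV"
      by (rule bij_betwI2[where g = "\<lambda>x. x(j0 := x j0 - s)"]) auto
    show "chi (dot b (x(j0 := x j0 + s))) = chi (s * b j0) * chi (dot b x)" for x
      by (simp add: dot_update chi_add mult.commute)
  qed (use s in auto)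
qed

lemma mtrace_mid: "mtrace (mid :: ('n::finite, 'q::finite) qmat) = of_nat (card (UNIV :: ('n \<Rightarrow> 'q) set))"
  unfolding mtrace_def mid_def by simp

lemma mtrace_pauliE:
  "mtrace (pauliE (u :: ('n::finite, 'q::{finite,field}) svec)) =
     (if u = szero then of_nat (card (UNIV :: ('n \<Rightarrow> 'q) set)) else 0)"
proof (cases "u = szero")
  case True thus ?thesis by (simp add: mtrace_mid)
next
  case False
  show ?thesis
  proof (cases "fst u = (\<lambda>_. 0)")
    case True
    hence "snd u \<noteq> (\<lambda>_. 0)" using False unfolding szero_def by (auto simp: prod_eq_iff)
    hence "(\<Sum>x\<in>UNIV. chi (dot (snd u) x)) = 0" by (rule char_sum_dot)
    thus ?thesis using False True unfolding mtrace_def pauliE_apply by simp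
  next
    case nz: False
    have "\<And>x::'n \<Rightarrow> 'q. x \<noteq> (\<lambda>j. x j + fst u j)"
    proof
      fix x :: "'n \<Rightarrow> 'q" assume "x = (\<lambda>j. x j + fst u j)"
      hence "\<And>j. fst u j = 0" by (metis add_cancel_left_right)
      thus False using nz by auto
    qed
    thus ?thesis using False unfolding mtrace_def pauliE_apply by simp
  qed
qed


section \<open>Stabilizer group and character\<close>

locale stab =
  fixes C :: "('n::finite, 'q::{finite,field}) svec set" and lam :: "('n, 'q) qmat \<Rightarrow> complex"
  assumes lin: "linear_code C"
    and ch: "stab_character C lam"
begin

definition lE :: "('n, 'q) svec \<Rightarrow> complex" where
  "lE y = lam (pauliE y)"

definition G :: "('n, 'q) svec \<Rightarrow> ('n, 'q) qmat" where
  "G y = mscale (1 / lE y) (pauliE y)"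

definition Proj :: "('n, 'q) svec set \<Rightarrow> ('n, 'q) qmat" where
  "Proj D = mscale (1 / of_nat (card D)) (msum D G)"

lemma lam_mult: "A \<in> stab_group C \<Longrightarrow> B \<in> stab_group C \<Longrightarrow> lam (mmul A B) = lam A * lam B"
  using ch unfolding stab_character_def by blast

lemma lam_nz: "A \<in> stab_group C \<Longrightarrow> lam A \<noteq> 0"
  using ch unfolding stab_character_def by blast

lemma lam_xi: "lam (mscale (xi TYPE('q)) mid) = xi TYPE('q)"
  using ch unfolding stab_character_def by blast

lemma scalar_in: "mscale (xi TYPE('q) ^ l) mid \<in> stab_group C"
  by (rule stab_group.scalar)

lemma mscale_mid_mult: "mmul (mscale a mid) (mscale b mid) = mscale (a * b) (mid :: ('n, 'q) qmat)"
  by (simp add: mmul_mscale_left mmul_mscale_right mscale_mscale mult.commute)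

lemma lam_mid: "lam (mid :: ('n, 'q) qmat) = 1"
proof -
  have m: "mid \<in> stab_group C" using scalar_in[of 0] by simp
  have "lam (mmul mid mid) = lam mid * lam mid" using lam_mult[OF m m] .
  hence "lam mid * 1 = lam mid * lam (mid :: ('n, 'q) qmat)" by simp
  thus ?thesis using lam_nz[OF m] mult_left_cancel by metis
qed

lemma lam_scalar: "lam (mscale (xi TYPE('q) ^ l) mid) = xi TYPE('q) ^ l"
proof (induction l)
  case 0 thus ?case using lam_mid by simp
next
  case (Suc l)
  have x1: "mscale (xi TYPE('q)) mid \<in> stab_group C" using scalar_in[of 1] by simp
  have h: "mscale (xi TYPE('q) ^ Suc l) mid = mmul (mscale (xi TYPE('q)) mid) (mscale (xi TYPE('q) ^ l) mid)"
    by (simp add: mmul_mscale_left mmul_mscale_right mscale_mscale mult.commute)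
  have "lam (mscale (xi TYPE('q) ^ Suc l) mid) = lam (mscale (xi TYPE('q)) mid) * lam (mscale (xi TYPE('q) ^ l) mid)"
    unfolding h by (rule lam_mult[OF x1 scalar_in])
  thus ?case using Suc lam_xi by simp
qed

lemma chi_scalar_in: "mscale (chi (t::'q)) mid \<in> stab_group C"
  unfolding chi_tk by (rule scalar_in)

lemma lam_chi_scalar: "lam (mscale (chi (t::'q)) mid) = chi t"
  unfolding chi_tk by (rule lam_scalar)

lemma mscale_as_mmul: "mscale c A = mmul (mscale c mid) A"
  by (simp add: mmul_mscale_left)

lemma lam_mscale_chi:
  assumes "A \<in> stab_group C"
  shows "mscale (chi (t::'q)) A \<in> stab_group C" "lam (mscale (chi t) A) = chi t * lam A"
proof -
  show "mscale (chi t) A \<in> stab_group C"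
    unfolding mscale_as_mmul[of "chi t" A] by (rule stab_group.mult[OF chi_scalar_in assms])
  show "lam (mscale (chi t) A) = chi t * lam A"
    unfolding mscale_as_mmul[of "chi t" A] using lam_mult[OF chi_scalar_in assms] lam_chi_scalar by simp
qed

lemma pauli_in: "y \<in> C \<Longrightarrow> pauliE y \<in> stab_group C"
  by (rule stab_group.gen)

lemma lE_mult:
  assumes "c \<in> C" "d \<in> C"
  shows "lE c * lE d = chi (dot (snd c) (fst d)) * lE (sadd c d)"
proof -
  have "lE c * lE d = lam (mmul (pauliE c) (pauliE d))"
    unfolding lE_def using lam_mult[OF pauli_in pauli_in, OF assms] by simp
  also have "\<dots> = chi (dot (snd c) (fst d)) * lE (sadd c d)"
    unfolding pauliE_mult lE_def
    by (rule lam_mscale_chi(2)[OF pauli_in[OF linear_codeD(2)[OF lin assms]]])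
  finally show ?thesis .
qed

lemma lE_szero: "lE szero = 1"
  unfolding lE_def using lam_mid by simp

lemma lE_nz: "c \<in> C \<Longrightarrow> lE c \<noteq> 0"
  unfolding lE_def by (rule lam_nz[OF pauli_in])

lemma lE_pow: "c \<in> C \<Longrightarrow> \<exists>t::'q. lE c ^ k = chi t * lE (sscale (of_nat k) c)"
proof (induction k)
  case 0 thus ?case using lE_szero chi_zero by (intro exI[of _ 0]) simp
next
  case (Suc k)
  obtain t :: 'q where t: "lE c ^ k = chi t * lE (sscale (of_nat k) c)" using Suc.IH[OF Suc.prems] by blast
  have kc: "sscale (of_nat k) c \<in> C" using linear_codeD(3)[OF lin Suc.prems] .
  have "lE c ^ Suc k = chi t * (lE c * lE (sscale (of_nat k) c))" using t by (simp add: mult_ac)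
  also have "\<dots> = chi t * (chi (dot (snd c) (fst (sscale (of_nat k) c))) * lE (sscale (of_nat (Suc k)) c))"
    using lE_mult[OF Suc.prems kc] by (simp add: sadd_sscale_Suc)
  also have "\<dots> = chi (t + dot (snd c) (fst (sscale (of_nat k) c))) * lE (sscale (of_nat (Suc k)) c)"
    by (simp add: chi_add mult_ac)
  finally show ?case by blast
qed

lemma lE_norm: "c \<in> C \<Longrightarrow> norm (lE c) = 1"
proof -
  assume c: "c \<in> C"
  obtain t :: 'q where t: "lE c ^ CHAR('q) = chi t * lE (sscale (of_nat CHAR('q)) c)" using lE_pow[OF c] by blast
  hence "lE c ^ CHAR('q) = chi t" by (simp add: lE_szero)
  hence "norm (lE c ^ CHAR('q)) = norm (chi t)" by simp
  hence "norm (lE c) ^ CHAR('q) = 1 ^ CHAR('q)" by (simp only: norm_power norm_chi power_one)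
  thus ?thesis by (rule power_eq_imp_eq_base) (use char_pos in auto)
qed

lemma lE_cnj: "c \<in> C \<Longrightarrow> cnj (lE c) = 1 / lE c"
proof -
  assume c: "c \<in> C"
  have "cnj (lE c) * lE c = 1" using lE_norm[OF c]
    by (metis complex_norm_square mult.commute of_real_1 power_one)
  thus ?thesis using lE_nz[OF c] by (simp add: field_simps)
qed

section \<open>The code space\<close>

lemma stab_code_iff:
  "v \<in> stab_code C lam \<longleftrightarrow> (\<forall>c\<in>C. mapply (pauliE c) v = (\<lambda>x. lE c * v x))"
proof
  assume "v \<in> stab_code C lam"
  thus "\<forall>c\<in>C. mapply (pauliE c) v = (\<lambda>x. lE c * v x)"
    unfolding stab_code_def lE_def using pauli_in by blast
next
  assume a: "\<forall>c\<in>C. mapply (pauliE c) v = (\<lambda>x. lE c * v x)"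
  have "mapply E v = (\<lambda>x. lam E * v x)" if "E \<in> stab_group C" for E
    using that
  proof (induction rule: stab_group.induct)
    case (scalar l) thus ?case by (simp add: mapply_mscale lam_scalar)
  next
    case (gen y) thus ?case using a unfolding lE_def by blast
  next
    case (mult A B)
    thus ?case by (simp add: mapply_mmul lam_mult mapply_scale mult_ac)
  qed
  thus "v \<in> stab_code C lam" unfolding stab_code_def by blast
qed

lemma G_mult:
  assumes "c \<in> C" "d \<in> C"
  shows "mmul (G c) (G d) = G (sadd c d)"
proof -
  have "mmul (G c) (G d) = mscale (chi (dot (snd c) (fst d)) / (lE c * lE d)) (pauliE (sadd c d))"
    unfolding G_def by (simp add: mmul_mscale_left mmul_mscale_right pauliE_mult mscale_mscale mult.commute[of "lE d"])
  also have "chi (dot (snd c) (fst d)) / (lE c * lE d) = 1 / lE (sadd c d)"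
    using lE_mult[OF assms] lE_nz[OF linear_codeD(2)[OF lin assms]] norm_chi[of "dot (snd c) (fst d)"]
    by (auto simp: field_simps)
  finally show ?thesis unfolding G_def .
qed

lemma G_szero [simp]: "G szero = mid"
  unfolding G_def by (simp add: lE_szero)

lemma madj_G:
  assumes "c \<in> C"
  shows "madj (G c) = G (sneg c)"
proof -
  have nc: "sneg c \<in> C" using linear_codeD(4)[OF lin assms] .
  have e: "lE c * lE (sneg c) = chi (- dot (snd c) (fst c))"
    using lE_mult[OF assms nc] lE_szero by (simp add: dot_neg_right)
  have k: "cnj (1 / lE c) = lE c" using lE_cnj[OF assms] lE_nz[OF assms] by (simp add: complex_cnj_divide)
  have m: "madj (G c) = mscale (lE c * chi (dot (snd c) (fst c))) (pauliE (sneg c))"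
    unfolding G_def madj_mscale madj_pauliE mscale_mscale k ..
  define d where "d = dot (snd c) (fst c)"
  have e2: "lE c * chi d * lE (sneg c) = 1"
  proof -
    have "lE c * chi d * lE (sneg c) = (lE c * lE (sneg c)) * chi d" by (simp only: mult_ac)
    also have "\<dots> = chi (- d) * chi d" using e unfolding d_def by simp
    also have "\<dots> = chi (- d + d)" by (simp only: chi_add)
    also have "\<dots> = 1" by (simp add: chi_zero)
    finally show ?thesis .
  qed
  have "lE c * chi (dot (snd c) (fst c)) = 1 / lE (sneg c)"
    using e2 lE_nz[OF nc] unfolding d_def by (simp add: field_simps)
  thus ?thesis using m by (simp add: G_def)
qed

lemma mapply_G: "v \<in> stab_code C lam \<Longrightarrow> c \<in> C \<Longrightarrow> mapply (G c) v = v"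
  unfolding G_def stab_code_iff by (auto simp: mapply_mscale lE_nz)

lemma finite_svec [simp]: "finite (D :: ('n, 'q) svec set)"
  by (rule finite_subset[of _ UNIV]) auto

context
  fixes D assumes linD: "linear_code D" and DC: "D \<subseteq> C"
begin

lemma card_D_pos: "card D > 0"
  using linear_codeD(1)[OF linD] by (auto simp: card_gt_0_iff)

lemma G_Proj: "c \<in> D \<Longrightarrow> mmul (G c) (Proj D) = Proj D"
proof -
  assume c: "c \<in> D"
  have "msum D (\<lambda>d. mmul (G c) (G d)) = msum D (\<lambda>d. G (sadd c d))"
    by (intro msum_cong G_mult) (use DC c in auto)
  also have "\<dots> = msum D G"
    by (rule msum_reindex_bij[symmetric], rule bij_betwI2[where g = "\<lambda>d. sadd (sneg c) d"])
       (use c linD in \<open>auto simp: linear_codeD sadd_assoc[symmetric]\<close>)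
  finally show ?thesis unfolding Proj_def by (simp add: mmul_mscale_right mmul_msum_right)
qed

lemma Proj_G: "c \<in> D \<Longrightarrow> mmul (Proj D) (G c) = Proj D"
proof -
  assume c: "c \<in> D"
  have "msum D (\<lambda>d. mmul (G d) (G c)) = msum D (\<lambda>d. G (sadd d c))"
    by (intro msum_cong G_mult) (use DC c in auto)
  also have "\<dots> = msum D G"
    by (rule msum_reindex_bij[symmetric], rule bij_betwI2[where g = "\<lambda>d. sadd d (sneg c)"])
       (use c linD in \<open>auto simp: linear_codeD sadd_assoc\<close>)
  finally show ?thesis unfolding Proj_def by (simp add: mmul_mscale_left mmul_msum_left)
qed

lemma Proj_idem: "mmul (Proj D) (Proj D) = Proj D"
proof -
  have "mmul (Proj D) (Proj D) = mscale (1 / of_nat (card D)) (msum D (\<lambda>c. mmul (G c) (Proj D)))"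
    by (subst (1) Proj_def) (simp only: mmul_mscale_left mmul_msum_left)
  also have "msum D (\<lambda>c. mmul (G c) (Proj D)) = msum D (\<lambda>c. Proj D)"
    by (intro msum_cong) (rule G_Proj)
  also have "\<dots> = mscale (of_nat (card D)) (Proj D)"
    using msum_mscale[of D "\<lambda>_. 1" "Proj D"] by simp
  finally have X: "mmul (Proj D) (Proj D) = mscale (1 / of_nat (card D)) (mscale (of_nat (card D)) (Proj D))" .
  have "D \<noteq> {}" using linear_codeD(1)[OF linD] by auto
  thus ?thesis unfolding X mscale_mscale using card_D_pos by simp
qed

lemma Proj_adj: "madj (Proj D) = Proj D"
proof -
  have "madj (msum D G) = msum D (\<lambda>c. G (sneg c))"
    unfolding madj_msum using DC by (intro msum_cong) (auto simp: madj_G)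
  also have "\<dots> = msum D G"
    by (rule msum_reindex_bij[symmetric], rule bij_betwI2[where g = sneg])
       (use linD in \<open>auto simp: linear_codeD\<close>)
  finally show ?thesis unfolding Proj_def madj_mscale by simp
qed

lemma Proj_fix: "v \<in> stab_code C lam \<Longrightarrow> mapply (Proj D) v = v"
proof -
  assume v: "v \<in> stab_code C lam"
  have "mapply (Proj D) v = (\<lambda>x. 1 / of_nat (card D) * (\<Sum>c\<in>D. mapply (G c) v x))"
    unfolding Proj_def mapply_mscale mapply_msum ..
  also have "\<dots> = (\<lambda>x. 1 / of_nat (card D) * (\<Sum>c\<in>D. v x))"
  proof (intro ext)
    fix x
    have "(\<Sum>c\<in>D. mapply (G c) v x) = (\<Sum>c\<in>D. v x)"
      by (rule sum.cong) (use mapply_G[OF v] DC in auto)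
    thus "1 / of_nat (card D) * (\<Sum>c\<in>D. mapply (G c) v x) = 1 / of_nat (card D) * (\<Sum>c\<in>D. v x)" by simp
  qed
  also have "\<dots> = v" using card_D_pos by (auto intro!: ext)
  finally show ?thesis .
qed

lemma mtrace_Proj: "mtrace (Proj D) = of_nat (card (UNIV :: ('n \<Rightarrow> 'q) set)) / of_nat (card D)"
proof -
  have "mtrace (msum D G) = (\<Sum>c\<in>D. if c = szero then of_nat (card (UNIV :: ('n \<Rightarrow> 'q) set)) else 0)"
    unfolding mtrace_msum G_def mtrace_mscale mtrace_pauliE by (intro sum.cong) (auto simp: lE_szero)
  also have "\<dots> = of_nat (card (UNIV :: ('n \<Rightarrow> 'q) set))"
    using linear_codeD(1)[OF linD] by simp
  finally show ?thesis unfolding Proj_def mtrace_mscale by simp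
qed

end

end


section \<open>Duality counting\<close>

definition VS :: "'n set \<Rightarrow> ('n, 'q::field) svec set" where
  "VS S = {v. ssupp v \<subseteq> S}"

definition perpS :: "'n set \<Rightarrow> ('n::finite, 'q::field) svec set \<Rightarrow> ('n, 'q) svec set" where
  "perpS S W = {v \<in> VS S. \<forall>w\<in>W. symp v w = 0}"

lemma if_one_mult_gen [simp]: "(if P then 1 else 0) * (a::'a::{mult_zero,monoid_mult}) = (if P then a else 0)"
  by simp

lemma ssupp_iff: "ssupp v \<subseteq> S \<longleftrightarrow> (\<forall>j. j \<notin> S \<longrightarrow> fst v j = 0 \<and> snd v j = 0)"
  unfolding ssupp_def by auto

lemma VS_linear: "linear_code (VS S :: ('n, 'q::field) svec set)"
  by (rule linear_codeI) (auto simp: VS_def ssupp_iff szero_def sadd_def sscale_def)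

lemma perpS_linear: "linear_code (perpS S W :: ('n::finite, 'q::field) svec set)"
proof (rule linear_codeI)
  show "szero \<in> perpS S W" using linear_codeD(1)[OF VS_linear] unfolding perpS_def by simp
  show "sadd u v \<in> perpS S W" if "u \<in> perpS S W" "v \<in> perpS S W" for u v
  proof -
    have u: "u \<in> VS S" "\<forall>w\<in>W. symp u w = 0" using that(1) unfolding perpS_def by blast+
    have v: "v \<in> VS S" "\<forall>w\<in>W. symp v w = 0" using that(2) unfolding perpS_def by blast+
    have "sadd u v \<in> VS S" by (rule linear_codeD(2)[OF VS_linear u(1) v(1)])
    moreover have "\<forall>w\<in>W. symp (sadd u v) w = 0" using u(2) v(2) by (simp add: symp_sadd_left)
    ultimately show ?thesis unfolding perpS_def by blast
  qed
  show "sscale c u \<in> perpS S W" if "u \<in> perpS S W" for u c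
  proof -
    have u: "u \<in> VS S" "\<forall>w\<in>W. symp u w = 0" using that(1) unfolding perpS_def by blast+
    have "sscale c u \<in> VS S" by (rule linear_codeD(3)[OF VS_linear u(1)])
    moreover have "\<forall>w\<in>W. symp (sscale c u) w = 0" using u(2) by (simp add: symp_sscale_left)
    ultimately show ?thesis unfolding perpS_def by blast
  qed
qed

lemma sdual_linear: "linear_code (sdual W :: ('n::finite, 'q::field) svec set)"
proof -
  have "sdual W = perpS UNIV W" unfolding sdual_def perpS_def VS_def by auto
  thus ?thesis using perpS_linear by simp
qed

lemma nondeg:
  fixes w :: "('n::finite, 'q::field) svec"
  assumes "w \<in> VS S" "\<forall>v\<in>VS S. symp v w = 0"
  shows "w = szero"
proof (rule ccontr)
  assume "w \<noteq> szero"
  then obtain j where j: "fst w j \<noteq> 0 \<or> snd w j \<noteq> 0" unfolding szero_def by (auto simp: prod_eq_iff)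
  hence jS: "j \<in> S" using assms(1) unfolding VS_def ssupp_iff by auto
  define d where "d = (\<lambda>i. if i = j then (1::'q) else 0)"
  have dS: "(d, \<lambda>_. 0) \<in> VS S" "((\<lambda>_. 0), d) \<in> VS S" unfolding VS_def ssupp_iff d_def using jS by auto
  have s1: "symp (d, \<lambda>_. 0) w = snd w j" unfolding symp_def d_def by simp
  have s2: "symp ((\<lambda>_. 0), d) w = - fst w j" unfolding symp_def d_def by simp
  have "symp (d, \<lambda>_. 0) w = 0" using assms(2) dS(1) by blast
  moreover have "symp ((\<lambda>_. 0), d) w = 0" using assms(2) dS(2) by blast
  ultimately show False using j s1 s2 by simp
qed

lemma count_perp:
  fixes W :: "('n::finite, 'q::{finite,field}) svec set"
  assumes lin: "linear_code W" and sub: "W \<subseteq> VS S"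
  shows "card W * card (perpS S W) = card (VS S :: ('n, 'q) svec set)"
proof -
  have "(\<Sum>v\<in>VS S. \<Sum>w\<in>W. chi (symp v w)) = (\<Sum>v\<in>VS S. if v \<in> perpS S W then of_nat (card W) else (0::complex))"
    by (rule sum.cong) (auto simp: char_sum_subspace[OF lin] perpS_def)
  also have "\<dots> = of_nat (card W) * of_nat (card (perpS S W))"
  proof -
    have "perpS S W = VS S \<inter> {v. v \<in> perpS S W}" unfolding perpS_def by auto
    thus ?thesis by (simp add: sum.If_cases)
  qed
  finally have e1: "(\<Sum>v\<in>VS S. \<Sum>w\<in>W. chi (symp v w)) = of_nat (card W * card (perpS S W))" by simp
  have "(\<Sum>w\<in>W. \<Sum>v\<in>VS S. chi (symp v w)) = (\<Sum>w\<in>W. if w = szero then of_nat (card (VS S :: ('n, 'q) svec set)) else (0::complex))"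
  proof (rule sum.cong)
    fix w assume w: "w \<in> W"
    have A: "(\<Sum>v\<in>VS S. chi (symp v w)) = (\<Sum>v\<in>VS S. chi (symp (sneg w) v))"
      by (simp add: symp_sneg_left symp_antisym[of w])
    have B: "(\<Sum>v\<in>VS S. chi (symp (sneg w) v)) = (if \<forall>v\<in>VS S. symp (sneg w) v = 0 then of_nat (card (VS S :: ('n, 'q) svec set)) else 0)"
      by (rule char_sum_subspace[OF VS_linear])
    have Cc: "(\<forall>v\<in>VS S. symp (sneg w) v = 0) = (w = szero)"
      using nondeg[of w S] w sub by (auto simp: symp_sneg_left symp_antisym[of w])
    show "(\<Sum>v\<in>VS S. chi (symp v w)) = (if w = szero then of_nat (card (VS S :: ('n, 'q) svec set)) else 0)"
      using A B Cc by simp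
  qed simp
  also have "\<dots> = of_nat (card (VS S :: ('n, 'q) svec set))" using linear_codeD(1)[OF lin] by simp
  finally have e2: "(\<Sum>w\<in>W. \<Sum>v\<in>VS S. chi (symp v w)) = of_nat (card (VS S :: ('n, 'q) svec set))" .
  have "(\<Sum>v\<in>VS S. \<Sum>w\<in>W. chi (symp v w)) = (\<Sum>w\<in>W. \<Sum>v\<in>VS S. chi (symp v w))"
    by (rule sum.swap)
  hence "(of_nat (card W * card (perpS S W)) :: complex) = of_nat (card (VS S :: ('n, 'q) svec set))" using e1 e2 by simp
  thus ?thesis by (simp only: of_nat_eq_iff)
qed

lemma VS_UNIV [simp]: "VS UNIV = UNIV"
  unfolding VS_def by auto

lemma perpS_UNIV: "perpS UNIV W = sdual W"
  unfolding sdual_def perpS_def by auto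

lemma card_pos_lin: "linear_code (W :: ('n::finite, 'q::{finite,field}) svec set) \<Longrightarrow> card W > 0"
  using linear_codeD(1) by (auto simp: card_gt_0_iff)

lemma double_dual:
  fixes C :: "('n::finite, 'q::{finite,field}) svec set"
  assumes lin: "linear_code C"
  shows "sdual (sdual C) = C"
proof -
  have sub: "C \<subseteq> sdual (sdual C)"
  proof
    fix c assume c: "c \<in> C"
    show "c \<in> sdual (sdual C)" unfolding sdual_def
    proof (clarify)
      fix v assume "\<forall>c\<in>C. symp v c = 0"
      hence "symp v c = 0" using c by blast
      thus "symp c v = 0" by (subst symp_antisym) simp
    qed
  qed
  have c1: "card C * card (sdual C) = card (UNIV :: ('n, 'q) svec set)"
    using count_perp[of C UNIV, OF lin] by (simp add: perpS_UNIV)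
  have c2: "card (sdual C) * card (sdual (sdual C)) = card (UNIV :: ('n, 'q) svec set)"
    using count_perp[of "sdual C" UNIV, OF sdual_linear] by (simp add: perpS_UNIV)
  have "card (sdual C) > 0" using card_pos_lin[OF sdual_linear] .
  moreover have "card (sdual (sdual C)) * card (sdual C) = card C * card (sdual C)"
    using c1 c2 by (simp add: mult.commute)
  ultimately have "card C = card (sdual (sdual C))" by (cases "sdual C = {}") auto
  thus ?thesis using sub by (intro card_subset_eq[symmetric]) auto
qed

lemma symp_proj:
  assumes "ssupp z \<subseteq> J"
  shows "symp z (proj J y) = symp z y"
proof -
  have "\<And>j. j \<notin> J \<Longrightarrow> fst z j = 0 \<and> snd z j = 0" using assms unfolding ssupp_iff by auto
  thus ?thesis unfolding symp_def proj_def
    by (intro arg_cong2[where f = "(-)"] sum.cong) auto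
qed

lemma proj_linear:
  assumes "linear_code W"
  shows "linear_code (proj J ` W)"
proof (rule linear_codeI)
  show "szero \<in> proj J ` W"
    using linear_codeD(1)[OF assms] by (intro image_eqI[of _ _ szero]) (auto simp: proj_def szero_def)
  show "sadd u v \<in> proj J ` W" if uv: "u \<in> proj J ` W" "v \<in> proj J ` W" for u v
  proof -
    obtain a where "u = proj J a" "a \<in> W" using uv(1) by (rule imageE)
    moreover obtain b where "v = proj J b" "b \<in> W" using uv(2) by (rule imageE)
    ultimately show ?thesis using linear_codeD(2)[OF assms]
      by (intro image_eqI[of _ _ "sadd a b"]) (auto simp: proj_def sadd_def)
  qed
  show "sscale c u \<in> proj J ` W" if uu: "u \<in> proj J ` W" for u c
  proof -
    obtain a where "u = proj J a" "a \<in> W" using uu by (rule imageE)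
    thus ?thesis using linear_codeD(3)[OF assms]
      by (intro image_eqI[of _ _ "sscale c a"]) (auto simp: proj_def sscale_def)
  qed
qed

lemma ssupp_proj: "ssupp (proj J y) \<subseteq> J"
  unfolding ssupp_def proj_def by auto

lemma duality:
  fixes C :: "('n::finite, 'q::{finite,field}) svec set"
  assumes lin: "linear_code C"
    and g: "ssupp g \<subseteq> J" "\<forall>c\<in>C. ssupp c \<subseteq> J \<longrightarrow> symp g c = 0"
  shows "g \<in> proj J ` sdual C"
proof -
  define W where "W = proj J ` sdual C"
  define CJ where "CJ = C \<inter> VS J"
  have linW: "linear_code W" unfolding W_def by (rule proj_linear[OF sdual_linear])
  have subW: "W \<subseteq> VS J"
  proof
    fix w assume "w \<in> W"
    then obtain y where "w = proj J y" unfolding W_def by (meson imageE)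
    thus "w \<in> VS J" unfolding VS_def by (simp add: ssupp_proj)
  qed
  have linCJ: "linear_code CJ" unfolding CJ_def using linear_codeD[OF lin] linear_codeD[OF VS_linear]
    by (intro linear_codeI) auto
  have subCJ: "CJ \<subseteq> VS J" unfolding CJ_def by auto
  have perpW: "perpS J W = CJ"
  proof -
    have "perpS J W = VS J \<inter> sdual (sdual C)"
    proof (intro set_eqI iffI)
      fix z assume z: "z \<in> perpS J W"
      hence zJ: "ssupp z \<subseteq> J" "\<forall>w\<in>W. symp z w = 0" unfolding perpS_def VS_def by auto
      have "symp z y = 0" if "y \<in> sdual C" for y
        using zJ(2) that symp_proj[OF zJ(1), of y] unfolding W_def by auto
      thus "z \<in> VS J \<inter> sdual (sdual C)" using zJ(1) unfolding VS_def sdual_def by auto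
    next
      fix z assume z: "z \<in> VS J \<inter> sdual (sdual C)"
      hence zJ: "ssupp z \<subseteq> J" "\<forall>y\<in>sdual C. symp z y = 0" unfolding VS_def sdual_def by auto
      have "symp z w = 0" if "w \<in> W" for w
      proof -
        obtain y where "y \<in> sdual C" "w = proj J y" using \<open>w \<in> W\<close> unfolding W_def by (meson imageE)
        thus ?thesis using zJ symp_proj[OF zJ(1), of y] by simp
      qed
      thus "z \<in> perpS J W" using zJ(1) unfolding perpS_def VS_def by auto
    qed
    thus ?thesis unfolding double_dual[OF lin] CJ_def by auto
  qed
  have WZ: "W \<subseteq> perpS J CJ"
  proof
    fix w assume "w \<in> W"
    then obtain y where y: "y \<in> sdual C" "w = proj J y" unfolding W_def by auto
    have "symp w c = 0" if c: "c \<in> CJ" for c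
    proof -
      have "ssupp c \<subseteq> J" "c \<in> C" using c unfolding CJ_def VS_def by auto
      hence "symp y c = 0" using y unfolding sdual_def by auto
      hence "symp c y = 0" by (subst symp_antisym) simp
      hence "symp c w = 0" using y symp_proj[of c J y] \<open>ssupp c \<subseteq> J\<close> by simp
      thus ?thesis by (subst symp_antisym) simp
    qed
    moreover have "w \<in> VS J" unfolding VS_def y(2) by (simp add: ssupp_proj)
    ultimately show "w \<in> perpS J CJ" unfolding perpS_def by auto
  qed
  have c1: "card W * card CJ = card (VS J :: ('n, 'q) svec set)" using count_perp[OF linW subW] perpW by simp
  have c2: "card CJ * card (perpS J CJ) = card (VS J :: ('n, 'q) svec set)" using count_perp[OF linCJ subCJ] .
  have "card CJ > 0" using card_pos_lin[OF linCJ] .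
  moreover have "card W * card CJ = card (perpS J CJ) * card CJ" using c1 c2 by (simp add: mult.commute)
  ultimately have "card W = card (perpS J CJ)" by (cases "CJ = {}") auto
  hence "W = perpS J CJ" using WZ by (intro card_subset_eq) auto
  moreover have "g \<in> perpS J CJ" using g unfolding perpS_def CJ_def VS_def by auto
  ultimately show ?thesis unfolding W_def by simp
qed


section \<open>Conjugation, locality, Kraus maps, Gamma\<close>

definition conjm :: "('n::finite, 'q::finite) qmat \<Rightarrow> ('n, 'q) qmat \<Rightarrow> ('n, 'q) qmat" where
  "conjm M rho = mmul (mmul M rho) (madj M)"

definition agree :: "'n set \<Rightarrow> ('n \<Rightarrow> 'q) \<Rightarrow> ('n \<Rightarrow> 'q) \<Rightarrow> bool" where
  "agree J x y \<longleftrightarrow> (\<forall>j. j \<notin> J \<longrightarrow> x j = y j)"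

definition loc :: "'n set \<Rightarrow> ('n, 'q::zero) qmat \<Rightarrow> bool" where
  "loc J M \<longleftrightarrow> lift_op J M = M"

lemma lift_op_agree: "lift_op J A x y = (if agree J x y then A (restr J x) (restr J y) else 0)"
  unfolding lift_op_def agree_def ..

lemma locD:
  assumes "loc J M"
  shows "M x y = (if agree J x y then M (restr J x) (restr J y) else 0)"
proof -
  have "M x y = lift_op J M x y" using assms unfolding loc_def by simp
  thus ?thesis unfolding lift_op_agree .
qed

lemma locI: "(\<And>x y. M x y = (if agree J x y then M (restr J x) (restr J y) else 0)) \<Longrightarrow> loc J M"
  unfolding loc_def by (intro ext) (simp add: lift_op_agree)

lemma restr_restr [simp]: "restr J (restr J x) = restr J x"
  unfolding restr_def by auto

lemma agree_sym: "agree J x y \<Longrightarrow> agree J y x"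
  unfolding agree_def by auto

lemma agree_trans: "agree J x y \<Longrightarrow> agree J y z \<Longrightarrow> agree J x z"
  unfolding agree_def by auto

lemma agree_refl [simp]: "agree J x x"
  unfolding agree_def by auto

lemma sum_agree:
  fixes g :: "('n::finite \<Rightarrow> 'q::{finite,zero}) \<Rightarrow> complex"
  shows "(\<Sum>z\<in>{z. agree J x z}. g (restr J z)) = (\<Sum>w\<in>{w. \<forall>j. j \<notin> J \<longrightarrow> w j = 0}. g w)"
proof (rule sum.reindex_bij_witness[where i = "\<lambda>w j. if j \<in> J then w j else x j" and j = "restr J"])
qed (auto simp: agree_def restr_def fun_eq_iff)

lemma loc_mmul:
  fixes M N :: "('n::finite, 'q::{finite,zero}) qmat"
  assumes M: "loc J M" and N: "loc J N"
  shows "loc J (mmul M N)"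
proof (rule locI)
  fix x y :: "'n \<Rightarrow> 'q"
  define g where "g = (\<lambda>w. M (restr J x) w * N w (restr J y))"
  have expand: "mmul M N u v = (if agree J u v then (\<Sum>z\<in>{z. agree J u z}. g (restr J z)) else 0)"
    if uv: "restr J u = restr J x" "restr J v = restr J y" for u v
  proof -
    have "mmul M N u v = (\<Sum>z\<in>UNIV. if agree J u z \<and> agree J z v then g (restr J z) else 0)"
      unfolding mmul_def g_def
    proof (rule sum.cong[OF refl])
      fix z
      show "M u z * N z v = (if agree J u z \<and> agree J z v then M (restr J x) (restr J z) * N (restr J z) (restr J y) else 0)"
        by (subst locD[OF M], subst locD[OF N]) (simp add: uv)
    qed
    also have "\<dots> = (if agree J u v then (\<Sum>z\<in>UNIV. if agree J u z then g (restr J z) else 0) else 0)"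
    proof (cases "agree J u v")
      case True
      have "agree J u z \<and> agree J z v \<longleftrightarrow> agree J u z" for z using True unfolding agree_def by auto
      thus ?thesis using True by simp
    next
      case False
      have "\<not> (agree J u z \<and> agree J z v)" for z using False agree_trans by blast
      hence "(\<Sum>z\<in>UNIV. if agree J u z \<and> agree J z v then g (restr J z) else 0) = 0"
        by (intro sum.neutral) auto
      thus ?thesis using False by simp
    qed
    also have "(\<Sum>z\<in>UNIV. if agree J u z then g (restr J z) else 0) = (\<Sum>z\<in>{z. agree J u z}. g (restr J z))"
      by (simp add: sum.If_cases)
    finally show ?thesis .
  qed
  have e1: "mmul M N x y = (if agree J x y then (\<Sum>z\<in>{z. agree J x z}. g (restr J z)) else 0)"
    by (rule expand) auto
  have e2: "mmul M N (restr J x) (restr J y) = (\<Sum>z\<in>{z. agree J (restr J x) z}. g (restr J z))"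
  proof -
    have ag: "agree J (restr J x) (restr J y)" unfolding agree_def restr_def by simp
    show ?thesis using expand[of "restr J x" "restr J y"] ag by simp
  qed
  show "mmul M N x y = (if agree J x y then mmul M N (restr J x) (restr J y) else 0)"
    unfolding e1 e2 sum_agree by simp
qed

lemma loc_mscale: "loc J M \<Longrightarrow> loc J (mscale c M)"
  unfolding mscale_def by (rule locI) (subst locD[of J M], assumption, simp)

lemma loc_msum: "(\<And>i. i \<in> S \<Longrightarrow> loc J (f i)) \<Longrightarrow> loc J (msum S f)"
proof (rule locI)
  fix x y
  assume a: "\<And>i. i \<in> S \<Longrightarrow> loc J (f i)"
  have "f i x y = (if agree J x y then f i (restr J x) (restr J y) else 0)" if "i \<in> S" for i
    using locD[OF a[OF that]] .
  thus "msum S f x y = (if agree J x y then msum S f (restr J x) (restr J y) else 0)"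
    unfolding msum_def by (auto intro!: sum.cong sum.neutral)
qed

lemma loc_mdiff: "loc J A \<Longrightarrow> loc J B \<Longrightarrow> loc J (mdiff A B)"
  unfolding mdiff_def by (rule locI) (subst locD[of J A], assumption, subst locD[of J B], assumption, simp)

lemma loc_madj: "loc J M \<Longrightarrow> loc J (madj M)"
  unfolding madj_def by (rule locI) (subst locD[of J M], assumption, auto dest: agree_sym)

lemma loc_pauliE:
  assumes "ssupp y \<subseteq> J"
  shows "loc J (pauliE (y :: ('n::finite, 'q::{finite,field}) svec))"
proof (rule locI)
  fix x' x :: "'n \<Rightarrow> 'q"
  have z: "\<And>j. j \<notin> J \<Longrightarrow> fst y j = 0 \<and> snd y j = 0" using assms unfolding ssupp_iff by auto
  have d: "dot (snd y) (restr J x) = dot (snd y) x"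
    unfolding dot_def restr_def by (intro sum.cong) (auto simp: z)
  have c: "(x' = (\<lambda>j. x j + fst y j)) \<longleftrightarrow> agree J x' x \<and> restr J x' = (\<lambda>j. restr J x j + fst y j)"
  proof
    assume "x' = (\<lambda>j. x j + fst y j)"
    thus "agree J x' x \<and> restr J x' = (\<lambda>j. restr J x j + fst y j)"
      unfolding agree_def restr_def fun_eq_iff using z by auto
  next
    assume a: "agree J x' x \<and> restr J x' = (\<lambda>j. restr J x j + fst y j)"
    show "x' = (\<lambda>j. x j + fst y j)"
    proof
      fix j show "x' j = x j + fst y j"
      proof (cases "j \<in> J")
        case True thus ?thesis using a unfolding restr_def fun_eq_iff by (auto dest: spec[of _ j])
      next
        case False thus ?thesis using a z unfolding agree_def by auto
      qed
    qed
  qed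
  show "pauliE y x' x = (if agree J x' x then pauliE y (restr J x') (restr J x) else 0)"
    unfolding pauliE_apply c d by auto
qed

lemma loc_mid: "loc J (mid :: ('n::finite, 'q::{finite,field}) qmat)"
proof -
  have "ssupp (szero :: ('n, 'q) svec) \<subseteq> J" unfolding ssupp_def szero_def by auto
  thus ?thesis using loc_pauliE[of "szero :: ('n, 'q) svec" J] by simp
qed

lemma lift_loc: "loc J M \<Longrightarrow> lift_op J M = M"
  unfolding loc_def .

lemma lift_commute:
  assumes "ssupp y \<inter> J = {}"
  shows "mmul (lift_op J A) (pauliE (y :: ('n::finite, 'q::{finite,field}) svec)) = mmul (pauliE y) (lift_op J A)"
proof (intro ext)
  fix x' x :: "'n \<Rightarrow> 'q"
  have z: "\<And>j. j \<in> J \<Longrightarrow> fst y j = 0 \<and> snd y j = 0" using assms unfolding ssupp_def by auto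
  define t where "t = (\<lambda>j. x j + fst y j)"
  define s where "s = (\<lambda>j. x' j - fst y j)"
  have l: "mmul (lift_op J A) (pauliE y) x' x = lift_op J A x' t * chi (dot (snd y) x)"
    unfolding mmul_def pauliE_apply t_def[symmetric] by (rule sum_delta_mult)
  have "mmul (pauliE y) (lift_op J A) x' x = (\<Sum>z\<in>UNIV. (if z = s then chi (dot (snd y) s) else 0) * lift_op J A z x)"
    unfolding mmul_def pauliE_apply s_def by (intro sum.cong) (auto simp: fun_eq_iff)
  also have "\<dots> = chi (dot (snd y) s) * lift_op J A s x"
    by (subst mult.commute) (simp add: sum_delta_mult[where f = "\<lambda>z. lift_op J A z x", unfolded mult.commute[of "lift_op J A _ x"]])
  finally have r: "mmul (pauliE y) (lift_op J A) x' x = chi (dot (snd y) s) * lift_op J A s x" .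
  have rt: "restr J t = restr J x" "restr J s = restr J x'" unfolding t_def s_def restr_def by (auto simp: z fun_eq_iff)
  have ag: "agree J x' t = agree J s x" unfolding agree_def t_def s_def by (auto simp: algebra_simps)
  have dd: "dot (snd y) s = dot (snd y) x" if a: "agree J s x"
    unfolding dot_def
  proof (rule sum.cong[OF refl])
    fix j show "snd y j * s j = snd y j * x j"
    proof (cases "j \<in> J")
      case True thus ?thesis using z by simp
    next
      case False thus ?thesis using a unfolding agree_def by simp
    qed
  qed
  show "mmul (lift_op J A) (pauliE y) x' x = mmul (pauliE y) (lift_op J A) x' x"
    unfolding l r lift_op_agree rt ag using dd by (auto simp: mult.commute)
qed

definition mzero :: "('n, 'q) qmat" where "mzero = (\<lambda>x y. 0)"

lemma kraus_Nil: "kraus_map J [] rho = mzero"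
  unfolding kraus_map_def mzero_def by simp

lemma kraus_Cons: "kraus_map J (A # As) rho = madd (conjm (lift_op J A) rho) (kraus_map J As rho)"
  unfolding kraus_map_def madd_def conjm_def by simp

lemma kraus_append: "kraus_map J (As @ Bs) rho = madd (kraus_map J As rho) (kraus_map J Bs rho)"
  unfolding kraus_map_def madd_def by simp

lemma kraus_as_sum: "kraus_map J As rho = (\<lambda>x y. \<Sum>A\<leftarrow>As. conjm (lift_op J A) rho x y)"
  unfolding kraus_map_def conjm_def ..

lemma conjm_mmul: "conjm (mmul A B) rho = conjm A (conjm B rho)"
  unfolding conjm_def by (simp add: madj_mmul mmul_assoc)

lemma conjm_mscale_left: "conjm (mscale c A) rho = mscale (c * cnj c) (conjm A rho)"
  unfolding conjm_def by (simp add: madj_mscale mmul_mscale_left mmul_mscale_right mscale_mscale mult.commute)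

lemma conjm_mscale_right: "conjm A (mscale c rho) = mscale c (conjm A rho)"
  unfolding conjm_def by (simp add: mmul_mscale_left mmul_mscale_right)

lemma conjm_msum: "conjm A (msum S f) = msum S (\<lambda>i. conjm A (f i))"
  unfolding conjm_def by (simp add: mmul_msum_left mmul_msum_right)

lemma conjm_madd: "conjm A (madd B D) = madd (conjm A B) (conjm A D)"
  unfolding conjm_def by (simp add: mmul_madd_left mmul_madd_right)

lemma conjm_mzero: "conjm A mzero = mzero"
  unfolding conjm_def mzero_def mmul_def by simp

lemma mtrace_conjm: "mtrace (conjm A rho) = mtrace (mmul (mmul (madj A) A) rho)"
proof -
  have "mtrace (conjm A rho) = mtrace (mmul A (mmul rho (madj A)))" unfolding conjm_def by (simp only: mmul_assoc)
  also have "\<dots> = mtrace (mmul (mmul rho (madj A)) A)" by (rule mtrace_mmul_comm)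
  also have "\<dots> = mtrace (mmul rho (mmul (madj A) A))" by (simp only: mmul_assoc)
  also have "\<dots> = mtrace (mmul (mmul (madj A) A) rho)" by (rule mtrace_mmul_comm)
  finally show ?thesis .
qed

lemma chi_mult_cnj: "chi t * cnj (chi t) = 1"
  using chi_cnj_mult[of t] by (simp add: mult.commute)

lemma conjm_ketbra: "conjm M (ketbra v) = ketbra (mapply M v)"
  unfolding conjm_def by (rule ketbra_conj)

lemma Gamma_msum:
  "Gamma I rho = mscale (1 / of_nat (card (UNIV :: 'q set) ^ (2 * card I)))
      (msum (VS I) (\<lambda>e. conjm (pauliE e) (rho :: ('n::finite, 'q::{finite,field}) qmat)))"
  unfolding Gamma_def msum_def conjm_def VS_def ..

lemma card_VS: "card (VS I :: ('n::finite, 'q::{finite,field}) svec set) = card (UNIV :: 'q set) ^ (2 * card I)"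
proof -
  have "bij_betw (\<lambda>e. (restrict (fst e) I, restrict (snd e) I)) (VS I :: ('n, 'q) svec set)
          ((I \<rightarrow>\<^sub>E (UNIV :: 'q set)) \<times> (I \<rightarrow>\<^sub>E (UNIV :: 'q set)))"
  proof (rule bij_betwI2[where g = "\<lambda>(a, b). (\<lambda>j. if j \<in> I then a j else 0, \<lambda>j. if j \<in> I then b j else 0)"])
    fix e :: "('n, 'q) svec" assume "e \<in> VS I"
    hence z: "\<And>j. j \<notin> I \<Longrightarrow> fst e j = 0 \<and> snd e j = 0" unfolding VS_def ssupp_iff by auto
    show "(case (restrict (fst e) I, restrict (snd e) I) of (a, b) \<Rightarrow> (\<lambda>j. if j \<in> I then a j else 0, \<lambda>j. if j \<in> I then b j else 0)) = e"
      using z by (auto simp: prod_eq_iff fun_eq_iff)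
  next
    fix y :: "('n \<Rightarrow> 'q) \<times> ('n \<Rightarrow> 'q)" assume "y \<in> (I \<rightarrow>\<^sub>E UNIV) \<times> (I \<rightarrow>\<^sub>E UNIV)"
    thus "(case y of (a, b) \<Rightarrow> (\<lambda>j. if j \<in> I then a j else 0, \<lambda>j. if j \<in> I then b j else 0)) \<in> VS I"
      and "(\<lambda>e. (restrict (fst e) I, restrict (snd e) I)) (case y of (a, b) \<Rightarrow> (\<lambda>j. if j \<in> I then a j else 0, \<lambda>j. if j \<in> I then b j else 0)) = y"
      by (auto simp: VS_def ssupp_iff PiE_def extensional_def fun_eq_iff split: prod.splits)
  qed (auto simp: VS_def)
  hence "card (VS I :: ('n, 'q) svec set) = card ((I \<rightarrow>\<^sub>E (UNIV :: 'q set)) \<times> (I \<rightarrow>\<^sub>E (UNIV :: 'q set)))"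
    by (rule bij_betw_same_card)
  also have "\<dots> = card (UNIV :: 'q set) ^ card I * card (UNIV :: 'q set) ^ card I"
    by (simp add: card_cartesian_product card_PiE)
  finally show ?thesis by (simp add: power_add[symmetric] mult_2)
qed

lemma Gamma_msum':
  "Gamma I rho = mscale (1 / of_nat (card (VS I :: ('n::finite, 'q::{finite,field}) svec set)))
      (msum (VS I) (\<lambda>e. conjm (pauliE e) (rho :: ('n, 'q) qmat)))"
  unfolding Gamma_msum card_VS ..

lemma mtrace_Gamma: "mtrace (Gamma I (rho :: ('n::finite, 'q::{finite,field}) qmat)) = mtrace rho"
proof -
  have "mtrace (msum (VS I) (\<lambda>e. conjm (pauliE e) rho)) = of_nat (card (VS I :: ('n, 'q) svec set)) * mtrace rho"
    unfolding mtrace_msum mtrace_conjm pauliE_unitary by simp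
  moreover have "card (VS I :: ('n, 'q) svec set) > 0" using card_pos_lin[OF VS_linear] .
  moreover have "VS I \<noteq> ({} :: ('n, 'q) svec set)" using linear_codeD(1)[OF VS_linear[of I]] by auto
  ultimately show ?thesis unfolding Gamma_msum' mtrace_mscale by simp
qed


lemma conjm_mid [simp]: "conjm mid X = X"
  unfolding conjm_def by simp

lemma conjm_pauli_inv: "conjm (madj (pauliE u)) (conjm (pauliE u) X) = X"
  unfolding conjm_mmul[symmetric] pauliE_unitary by simp

lemma dot_disjoint: "(\<And>j. a j = 0 \<or> b j = 0) \<Longrightarrow> dot a b = 0"
  unfolding dot_def by (rule sum.neutral) (metis mult_eq_0_iff)

lemma symp_disjoint:
  assumes "ssupp u \<inter> ssupp v = {}"
  shows "symp u v = 0"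
proof -
  have "\<And>j. (fst u j = 0 \<and> snd u j = 0) \<or> (fst v j = 0 \<and> snd v j = 0)"
    using assms unfolding ssupp_def by auto
  hence "dot (fst u) (snd v) = 0" "dot (snd u) (fst v) = 0" by (auto intro!: dot_disjoint)
  thus ?thesis by (simp add: symp_dot)
qed

lemma fst_proj: "fst (proj R y) = (\<lambda>j. if j \<in> R then fst y j else 0)"
  and snd_proj: "snd (proj R y) = (\<lambda>j. if j \<in> R then snd y j else 0)"
  unfolding proj_def by simp_all

lemma proj_id: "ssupp v \<subseteq> R \<Longrightarrow> proj R v = v"
  unfolding proj_def ssupp_iff by (auto simp: prod_eq_iff fun_eq_iff)

lemma proj_proj: "proj R (proj S v) = proj (R \<inter> S) v"
  unfolding proj_def by (auto simp: fun_eq_iff)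

lemma mapply_add: "mapply A (\<lambda>x. u x + v x) = (\<lambda>x. mapply A u x + mapply A v x)"
  using mapply_lin[of A 1 u 1 v] by simp

lemma polar_alg:
  fixes p1 p2 q1 q2 r1 r2 s1 s2 :: complex
  assumes e1: "p1 * cnj p2 = r1 * cnj r2" and e2: "q1 * cnj q2 = s1 * cnj s2"
    and e3: "(p1 + q1) * cnj (p2 + q2) = (r1 + s1) * cnj (r2 + s2)"
    and e4: "(p1 + \<i> * q1) * cnj (p2 + \<i> * q2) = (r1 + \<i> * s1) * cnj (r2 + \<i> * s2)"
  shows "p1 * cnj q2 = r1 * cnj s2"
proof -
  have a: "p1 * cnj q2 + q1 * cnj p2 = r1 * cnj s2 + s1 * cnj r2"
    using e1 e2 e3 by (simp add: algebra_simps)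
  have b: "- \<i> * (p1 * cnj q2) + \<i> * (q1 * cnj p2) = - \<i> * (r1 * cnj s2) + \<i> * (s1 * cnj r2)"
    using e1 e2 e4 by (simp add: algebra_simps)
  have b': "p1 * cnj q2 - q1 * cnj p2 = r1 * cnj s2 - s1 * cnj r2"
  proof -
    have "\<i> * (- \<i> * (p1 * cnj q2) + \<i> * (q1 * cnj p2)) = \<i> * (- \<i> * (r1 * cnj s2) + \<i> * (s1 * cnj r2))"
      using b by simp
    thus ?thesis by (simp add: algebra_simps)
  qed
  have "2 * (p1 * cnj q2) = (p1 * cnj q2 + q1 * cnj p2) + (p1 * cnj q2 - q1 * cnj p2)" by simp
  also have "\<dots> = (r1 * cnj s2 + s1 * cnj r2) + (r1 * cnj s2 - s1 * cnj r2)" by (simp only: a b')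
  also have "\<dots> = 2 * (r1 * cnj s2)" by simp
  finally show ?thesis by simp
qed

lemma polarization:
  fixes M :: "('n::finite, 'q::finite) qmat" and Q :: "('n, 'q) qvec set"
  assumes lin: "\<And>u v a b. u \<in> Q \<Longrightarrow> v \<in> Q \<Longrightarrow> (\<lambda>x. a * u x + b * v x) \<in> Q"
    and iso: "\<And>u. u \<in> Q \<Longrightarrow> ketbra (mapply M u) = ketbra u"
    and psi: "psi \<in> Q" "psi y0 \<noteq> 0"
  shows "\<exists>mu. mu \<noteq> 0 \<and> (\<forall>u\<in>Q. mapply M u = (\<lambda>x. mu * u x))"
proof -
  define b where "b = mapply M psi"
  have bb: "b y0 * cnj (b y0) = psi y0 * cnj (psi y0)"
    using fun_cong[OF fun_cong[OF iso[OF psi(1)], of y0], of y0] unfolding ketbra_def b_def by simp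
  have b0: "b y0 \<noteq> 0" using bb psi(2) by auto
  define mu where "mu = cnj (psi y0) / cnj (b y0)"
  have "mapply M u = (\<lambda>x. mu * u x)" if u: "u \<in> Q" for u
  proof
    fix x
    define a where "a = mapply M u"
    have k: "\<And>w. w \<in> Q \<Longrightarrow> mapply M w x * cnj (mapply M w y0) = w x * cnj (w y0)"
      using iso unfolding ketbra_def by (metis)
    have e1: "a x * cnj (a y0) = u x * cnj (u y0)" using k[OF u] unfolding a_def .
    have e2: "b x * cnj (b y0) = psi x * cnj (psi y0)" using k[OF psi(1)] unfolding b_def .
    have e3: "(a x + b x) * cnj (a y0 + b y0) = (u x + psi x) * cnj (u y0 + psi y0)"
      using k[OF lin[OF u psi(1), of 1 1]] unfolding a_def b_def mapply_add by simp
    have e4: "(a x + \<i> * b x) * cnj (a y0 + \<i> * b y0) = (u x + \<i> * psi x) * cnj (u y0 + \<i> * psi y0)"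
      using k[OF lin[OF u psi(1), of 1 "\<i>"]] unfolding a_def b_def using mapply_lin[of M 1 u "\<i>" psi] by simp
    have "a x * cnj (b y0) = u x * cnj (psi y0)" by (rule polar_alg[OF e1 e2 e3 e4])
    hence "a x = u x * cnj (psi y0) / cnj (b y0)" using b0 by (simp add: field_simps)
    thus "mapply M u x = mu * u x" unfolding a_def mu_def by simp
  qed
  moreover have "mu \<noteq> 0" unfolding mu_def using psi(2) b0 by simp
  ultimately show ?thesis by blast
qed

context stab
begin

abbreviation Q where "Q \<equiv> stab_code C lam"

lemma Q_lin: "u \<in> Q \<Longrightarrow> v \<in> Q \<Longrightarrow> (\<lambda>x. a * u x + b * v x) \<in> Q"
  unfolding stab_code_iff by (simp add: mapply_lin algebra_simps)

lemma Q_pauli: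
  assumes y: "y \<in> sdual C" and phi: "phi \<in> Q"
  shows "mapply (pauliE y) phi \<in> Q"
  unfolding stab_code_iff
proof
  fix c assume c: "c \<in> C"
  have s: "symp y c = 0" using y c unfolding sdual_def by auto
  have "mapply (pauliE c) (mapply (pauliE y) phi) = mapply (mmul (pauliE c) (pauliE y)) phi"
    by (simp add: mapply_mmul)
  also have "\<dots> = mapply (pauliE y) (mapply (pauliE c) phi)"
    unfolding pauliE_commute[of c y] s chi_zero by (simp add: mapply_mmul)
  also have "\<dots> = (\<lambda>x. lE c * mapply (pauliE y) phi x)"
    using phi c unfolding stab_code_iff by (simp add: mapply_scale)
  finally show "mapply (pauliE c) (mapply (pauliE y) phi) = (\<lambda>x. lE c * mapply (pauliE y) phi x)" .
qed

lemma Gamma_conj_inside: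
  fixes g :: "('n, 'q) svec"
  assumes g: "ssupp g \<subseteq> I"
  shows "Gamma I (conjm (pauliE g) rho) = Gamma I rho"
proof -
  have gI: "g \<in> VS I" using g unfolding VS_def by simp
  have "msum (VS I) (\<lambda>e. conjm (pauliE e) (conjm (pauliE g) rho)) = msum (VS I) (\<lambda>e. conjm (pauliE (sadd e g)) rho)"
  proof (rule msum_cong)
    fix e
    show "conjm (pauliE e) (conjm (pauliE g) rho) = conjm (pauliE (sadd e g)) rho"
      unfolding conjm_mmul[symmetric] pauliE_mult conjm_mscale_left chi_mult_cnj by simp
  qed
  also have "\<dots> = msum (VS I) (\<lambda>e. conjm (pauliE e) rho)"
    by (rule msum_reindex_bij[symmetric], rule bij_betwI2[where g = "\<lambda>e. sadd e (sneg g)"])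
       (use gI in \<open>auto simp: linear_codeD[OF VS_linear] sadd_assoc\<close>)
  finally show ?thesis unfolding Gamma_msum' by simp
qed

lemma Gamma_conj_outside:
  fixes b :: "('n, 'q) svec"
  assumes b: "ssupp b \<inter> I = {}"
  shows "Gamma I (conjm (pauliE b) rho) = conjm (pauliE b) (Gamma I rho)"
proof -
  have "msum (VS I) (\<lambda>e. conjm (pauliE e) (conjm (pauliE b) rho)) = msum (VS I) (\<lambda>e. conjm (pauliE b) (conjm (pauliE e) rho))"
  proof (rule msum_cong)
    fix e :: "('n, 'q) svec" assume "e \<in> VS I"
    hence "ssupp b \<inter> ssupp e = {}" using b unfolding VS_def by auto
    hence s: "symp b e = 0" by (rule symp_disjoint)
    show "conjm (pauliE e) (conjm (pauliE b) rho) = conjm (pauliE b) (conjm (pauliE e) rho)"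
      unfolding conjm_mmul[symmetric] pauliE_commute[of e b] s chi_zero by simp
  qed
  thus ?thesis unfolding Gamma_msum' conjm_mscale_right conjm_msum by simp
qed

lemma kraus_conj_outside:
  fixes b :: "('n, 'q) svec"
  assumes b: "ssupp b \<inter> J = {}"
  shows "kraus_map J As (conjm (pauliE b) rho) = conjm (pauliE b) (kraus_map J As rho)"
proof (induction As)
  case Nil thus ?case by (simp add: kraus_Nil conjm_mzero)
next
  case (Cons A As)
  have "conjm (lift_op J A) (conjm (pauliE b) rho) = conjm (pauliE b) (conjm (lift_op J A) rho)"
    unfolding conjm_mmul[symmetric] lift_commute[OF b] ..
  thus ?case by (simp add: kraus_Cons Cons conjm_madd)
qed

lemma column_in_Q:
  "(\<lambda>x. Proj C x y) \<in> Q"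
  unfolding stab_code_iff
proof
  fix c assume c: "c \<in> C"
  have E: "pauliE c = mscale (lE c) (G c)" unfolding G_def mscale_mscale using lE_nz[OF c] by simp
  have "mmul (pauliE c) (Proj C) = mscale (lE c) (Proj C)"
    unfolding E mmul_mscale_left G_Proj[OF lin subset_refl c] ..
  hence "\<And>x. mmul (pauliE c) (Proj C) x y = lE c * Proj C x y" unfolding mscale_def by metis
  thus "mapply (pauliE c) (\<lambda>x. Proj C x y) = (\<lambda>x. lE c * Proj C x y)"
    unfolding mapply_def mmul_def by auto
qed

lemma exists_nonzero_column: "\<exists>y0. Proj C y0 y0 \<noteq> 0"
proof (rule ccontr)
  assume "\<not> (\<exists>y0. Proj C y0 y0 \<noteq> 0)"
  hence "mtrace (Proj C) = 0" unfolding mtrace_def by simp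
  moreover have "card C > 0" using card_pos_lin[OF lin] .
  moreover have "C \<noteq> {}" using linear_codeD(1)[OF lin] by auto
  ultimately show False using mtrace_Proj[OF lin subset_refl] by simp
qed

lemma scalar_pauli_in_C:
  assumes mu: "mu \<noteq> 0" and act: "\<forall>u\<in>Q. mapply (pauliE g) u = (\<lambda>x. mu * u x)"
  shows "g \<in> C"
proof (rule ccontr)
  assume gC: "g \<notin> C"
  have "mmul (pauliE g) (Proj C) = mscale mu (Proj C)"
  proof (intro ext)
    fix x y
    have "mmul (pauliE g) (Proj C) x y = mapply (pauliE g) (\<lambda>x. Proj C x y) x"
      unfolding mmul_def mapply_def ..
    also have "\<dots> = mu * Proj C x y" using act column_in_Q[of y] by simp
    finally show "mmul (pauliE g) (Proj C) x y = mscale mu (Proj C) x y" unfolding mscale_def .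
  qed
  hence t1: "mtrace (mmul (pauliE g) (Proj C)) = mu * mtrace (Proj C)" by (simp add: mtrace_mscale)
  have "mtrace (mmul (pauliE g) (G c)) = 0" if c: "c \<in> C" for c
  proof -
    have "sadd g c \<noteq> szero"
    proof
      assume "sadd g c = szero"
      hence "g = sneg c" by (metis sadd_assoc sadd_sneg(1) sadd_szero(1))
      thus False using gC linear_codeD(4)[OF lin c] by simp
    qed
    thus ?thesis unfolding G_def mmul_mscale_right pauliE_mult mtrace_mscale mtrace_pauliE by simp
  qed
  hence "mtrace (mmul (pauliE g) (Proj C)) = 0"
    unfolding Proj_def mmul_mscale_right mmul_msum_right mtrace_mscale mtrace_msum by simp
  moreover have "mtrace (Proj C) \<noteq> 0"
    using mtrace_Proj[OF lin subset_refl] card_pos_lin[OF lin] linear_codeD(1)[OF lin] by auto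
  ultimately show False using t1 mu by simp
qed

context
  fixes I J :: "'n set" and As
  assumes IJ: "I \<subseteq> J"
    and rec: "\<forall>\<phi>\<in>Q. kraus_map J As (Gamma I (ketbra \<phi>)) = ketbra \<phi>"
begin

lemma T_conj_outside:
  fixes b :: "('n, 'q) svec"
  assumes b: "ssupp b \<inter> J = {}"
  shows "kraus_map J As (Gamma I (conjm (pauliE b) rho)) = conjm (pauliE b) (kraus_map J As (Gamma I rho))"
proof -
  have "ssupp b \<inter> I = {}" using b IJ by auto
  thus ?thesis by (simp add: Gamma_conj_outside kraus_conj_outside[OF b])
qed

lemma fwd_key:
  assumes y: "y \<in> sdual C" and yA: "\<forall>j\<in>J - I. fst y j = 0 \<and> snd y j = 0"
  shows "proj I y \<in> C"
proof -
  define yI where "yI = proj I y"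
  define yB where "yB = proj (- J) y"
  have sI: "ssupp yI \<subseteq> I" unfolding yI_def by (rule ssupp_proj)
  have sB: "ssupp yB \<inter> J = {}" using ssupp_proj[of "- J" y] unfolding yB_def by auto
  have dec: "sadd yB yI = y"
    unfolding yI_def yB_def sadd_def fst_proj snd_proj
    using yA IJ by (auto simp: prod_eq_iff fun_eq_iff)
  have d0: "dot (snd yB) (fst yI) = 0"
    unfolding yI_def yB_def fst_proj snd_proj using IJ by (intro dot_disjoint) auto
  have Ey: "pauliE y = mmul (pauliE yB) (pauliE yI)"
    unfolding pauliE_mult d0 chi_zero dec by simp
  have iso: "ketbra (mapply (pauliE yI) u) = ketbra u" if u: "u \<in> Q" for u
  proof -
    have psi: "mapply (pauliE y) u \<in> Q" by (rule Q_pauli[OF y u])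
    have "ketbra (mapply (pauliE y) u) = conjm (pauliE yB) (conjm (pauliE yI) (ketbra u))"
      unfolding conjm_ketbra Ey mapply_mmul ..
    also have "\<dots> = kraus_map J As (Gamma I (conjm (pauliE yB) (conjm (pauliE yI) (ketbra u))))"
      using rec psi unfolding conjm_ketbra Ey mapply_mmul by simp
    also have "\<dots> = conjm (pauliE yB) (kraus_map J As (Gamma I (ketbra u)))"
      unfolding T_conj_outside[OF sB] Gamma_conj_inside[OF sI] ..
    also have "\<dots> = conjm (pauliE yB) (ketbra u)" using rec u by simp
    finally have "conjm (pauliE yB) (ketbra (mapply (pauliE yI) u)) = conjm (pauliE yB) (ketbra u)"
      unfolding Ey mapply_mmul conjm_ketbra by simp
    hence "conjm (madj (pauliE yB)) (conjm (pauliE yB) (ketbra (mapply (pauliE yI) u)))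
         = conjm (madj (pauliE yB)) (conjm (pauliE yB) (ketbra u))" by simp
    thus ?thesis unfolding conjm_pauli_inv .
  qed
  obtain y0 where y0: "Proj C y0 y0 \<noteq> 0" using exists_nonzero_column by blast
  obtain mu where mu: "mu \<noteq> 0" "\<forall>u\<in>Q. mapply (pauliE yI) u = (\<lambda>x. mu * u x)"
    using polarization[of Q "pauliE yI" "\<lambda>x. Proj C x y0" y0] Q_lin iso column_in_Q y0 by blast
  have "yI \<in> C" by (rule scalar_pauli_in_C[OF mu])
  thus ?thesis unfolding yI_def .
qed

end

end


lemma lin_inter: "linear_code A \<Longrightarrow> linear_code B \<Longrightarrow> linear_code (A \<inter> B)"
  unfolding linear_code_def by auto

lemma mult_if_one_gen [simp]: "(a::'a::{mult_zero,monoid_mult}) * (if P then 1 else 0) = (if P then a else 0)"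
  by simp

lemma mapply_zero [simp]: "mapply A (\<lambda>x. 0) = (\<lambda>x. 0)"
  unfolding mapply_def by simp

lemma ketbra_zero: "ketbra (\<lambda>x. 0) = mzero"
  unfolding ketbra_def mzero_def by simp

lemma msum_mzero: "msum S (\<lambda>i. mzero) = mzero"
  unfolding msum_def mzero_def by simp

lemma mscale_mzero: "mscale c mzero = mzero"
  unfolding mscale_def mzero_def by simp

lemma madd_mzero: "madd A mzero = A"
  unfolding madd_def mzero_def by simp

lemma conjm_zero_vec: "conjm A (ketbra (\<lambda>x. 0)) = mzero"
  unfolding conjm_ketbra by (simp add: ketbra_zero)

context stab
begin

lemma loc_Proj:
  assumes "D \<subseteq> VS J"
  shows "loc J (Proj D)"
  unfolding Proj_def G_def
  by (intro loc_mscale loc_msum loc_pauliE) (use assms in \<open>auto simp: VS_def\<close>)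

lemma G_as: "c \<in> C \<Longrightarrow> pauliE c = mscale (lE c) (G c)"
  unfolding G_def mscale_mscale using lE_nz by simp

lemma conjm_pauli_G:
  "conjm (pauliE e) (G c) = mscale (chi (symp c e)) (G c)"
proof -
  have "conjm (pauliE e) (G c) = mscale (1 / lE c) (mmul (mmul (pauliE e) (pauliE c)) (madj (pauliE e)))"
    unfolding conjm_def G_def by (simp add: mmul_mscale_left mmul_mscale_right)
  also have "mmul (mmul (pauliE e) (pauliE c)) (madj (pauliE e)) = mscale (chi (symp c e)) (pauliE c)"
    unfolding pauliE_commute[of e c] mmul_mscale_left mmul_assoc pauliE_unitary by simp
  finally show ?thesis unfolding G_def by (simp add: mscale_mscale mult.commute)
qed

context
  fixes I J :: "'n set"
  assumes IJ: "I \<subseteq> J"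
    and star: "\<And>g. ssupp g \<subseteq> I \<Longrightarrow> (\<forall>c\<in>C. ssupp c \<subseteq> J \<longrightarrow> symp g c = 0) \<Longrightarrow> g \<in> C"
begin

definition "CJ = C \<inter> VS J"
definition "CA = C \<inter> VS (J - I)"
definition "PJ = Proj CJ"
definition "PA = Proj CA"
definition "NI = card (VS I :: ('n, 'q) svec set)"
definition "kap = sqrt (real (card CJ) / (real NI * real (card CA)))"
definition "Ke e = mscale (complex_of_real kap) (mmul PJ (madj (pauliE e)))"
definition "K0 = mdiff mid PA"

lemma linCJ: "linear_code CJ" unfolding CJ_def by (rule lin_inter[OF lin VS_linear])
lemma linCA: "linear_code CA" unfolding CA_def by (rule lin_inter[OF lin VS_linear])
lemma CJ_sub: "CJ \<subseteq> C" unfolding CJ_def by auto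
lemma CA_sub: "CA \<subseteq> C" unfolding CA_def by auto
lemma CA_CJ: "CA \<subseteq> CJ" unfolding CA_def CJ_def VS_def by auto

lemma NI_pos: "NI > 0" unfolding NI_def by (rule card_pos_lin[OF VS_linear])

lemma loc_Ke: "e \<in> VS I \<Longrightarrow> loc J (Ke e)"
  unfolding Ke_def PJ_def
  by (intro loc_mscale loc_mmul loc_Proj loc_madj loc_pauliE) (use IJ in \<open>auto simp: CJ_def VS_def\<close>)

lemma loc_K0: "loc J K0"
  unfolding K0_def PA_def
  by (intro loc_mdiff loc_mid loc_Proj) (auto simp: CA_def VS_def)

lemma madj_Ke_Ke: "mmul (madj (Ke e)) (Ke e) = mscale (complex_of_real (kap\<^sup>2)) (conjm (pauliE e) PJ)"
proof -
  have "mmul (madj (Ke e)) (Ke e) = mscale (complex_of_real kap * complex_of_real kap)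
          (mmul (mmul (pauliE e) (madj PJ)) (mmul PJ (madj (pauliE e))))"
    unfolding Ke_def madj_mscale madj_mmul by (simp add: mmul_mscale_left mmul_mscale_right mscale_mscale)
  also have "mmul (mmul (pauliE e) (madj PJ)) (mmul PJ (madj (pauliE e))) = conjm (pauliE e) PJ"
  proof -
    have "mmul (mmul (pauliE e) (madj PJ)) (mmul PJ (madj (pauliE e)))
        = mmul (mmul (pauliE e) (mmul PJ PJ)) (madj (pauliE e))"
      unfolding PJ_def Proj_adj[OF linCJ CJ_sub] by (simp only: mmul_assoc)
    thus ?thesis unfolding PJ_def Proj_idem[OF linCJ CJ_sub] conjm_def .
  qed
  finally show ?thesis by (simp add: power2_eq_square)
qed

lemma CA_char:
  assumes c: "c \<in> CJ"
  shows "(\<forall>e\<in>VS I. symp c e = 0) \<longleftrightarrow> c \<in> CA"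
proof
  assume a: "\<forall>e\<in>VS I. symp c e = 0"
  have "fst c j = 0 \<and> snd c j = 0" if j: "j \<in> I" for j
  proof -
    define d where "d = (\<lambda>i. if i = j then (1::'q) else 0)"
    have dS: "((\<lambda>_. 0), d) \<in> VS I" "(d, \<lambda>_. 0) \<in> VS I" unfolding VS_def ssupp_iff d_def using j by auto
    have s1: "symp c ((\<lambda>_. 0), d) = fst c j" unfolding symp_def d_def by simp
    have s2: "symp c (d, \<lambda>_. 0) = - snd c j" unfolding symp_def d_def by simp
    show ?thesis using a dS s1 s2 by auto
  qed
  thus "c \<in> CA" using c unfolding CJ_def CA_def VS_def ssupp_iff by auto
next
  assume "c \<in> CA"
  hence "ssupp c \<subseteq> J - I" unfolding CA_def VS_def by auto
  thus "\<forall>e\<in>VS I. symp c e = 0" unfolding VS_def by (auto intro!: symp_disjoint)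
qed

lemma msum_G_Proj: "linear_code D \<Longrightarrow> msum D G = mscale (of_nat (card D)) (Proj D)"
proof -
  assume D: "linear_code D"
  have "card D > 0" using card_pos_lin[OF D] .
  moreover have "D \<noteq> {}" using linear_codeD(1)[OF D] by auto
  ultimately show ?thesis unfolding Proj_def mscale_mscale by simp
qed

lemma key_sum:
  "msum (VS I) (\<lambda>e. conjm (pauliE e) PJ) = mscale (of_nat NI * of_nat (card CA) / of_nat (card CJ)) PA"
proof -
  have "msum (VS I) (\<lambda>e. conjm (pauliE e) PJ)
        = msum (VS I) (\<lambda>e. mscale (1 / of_nat (card CJ)) (msum CJ (\<lambda>c. mscale (chi (symp c e)) (G c))))"
    unfolding PJ_def Proj_def conjm_mscale_right conjm_msum conjm_pauli_G ..
  also have "\<dots> = mscale (1 / of_nat (card CJ)) (msum CJ (\<lambda>c. mscale (\<Sum>e\<in>VS I. chi (symp c e)) (G c)))"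
    unfolding mscale_msum[symmetric] msum_swap[of _ CJ] msum_mscale ..
  also have "msum CJ (\<lambda>c. mscale (\<Sum>e\<in>VS I. chi (symp c e)) (G c)) = msum CJ (\<lambda>c. if c \<in> CA then mscale (of_nat NI) (G c) else mzero)"
  proof (rule msum_cong)
    fix c assume c: "c \<in> CJ"
    show "mscale (\<Sum>e\<in>VS I. chi (symp c e)) (G c) = (if c \<in> CA then mscale (of_nat NI) (G c) else mzero)"
      unfolding char_sum_subspace[OF VS_linear] CA_char[OF c] NI_def by (simp add: mscale_def mzero_def)
  qed
  also have "\<dots> = msum CA (\<lambda>c. mscale (of_nat NI) (G c))"
    unfolding msum_def mzero_def
  proof (intro ext)
    fix x y
    have "(\<Sum>i\<in>CJ. (if i \<in> CA then mscale (of_nat NI) (G i) else (\<lambda>x y. 0)) x y)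
        = (\<Sum>i\<in>CJ. if i \<in> CA then mscale (of_nat NI) (G i) x y else 0)"
      by (rule sum.cong) auto
    also have "\<dots> = (\<Sum>i\<in>CJ \<inter> CA. mscale (of_nat NI) (G i) x y)"
      by (simp add: sum.inter_restrict)
    also have "CJ \<inter> CA = CA" using CA_CJ by auto
    finally show "(\<Sum>i\<in>CJ. (if i \<in> CA then mscale (of_nat NI) (G i) else (\<lambda>x y. 0)) x y)
        = (\<Sum>i\<in>CA. mscale (of_nat NI) (G i) x y)" .
  qed
  also have "\<dots> = mscale (of_nat NI * of_nat (card CA)) PA"
    unfolding mscale_msum[symmetric] msum_G_Proj[OF linCA] PA_def mscale_mscale ..
  finally show ?thesis by (simp add: mscale_mscale)
qed


lemma kap_sq: "complex_of_real (kap\<^sup>2) * (of_nat NI * of_nat (card CA) / of_nat (card CJ)) = 1"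
proof -
  have pos: "card CJ > 0" "card CA > 0" "NI > 0" using card_pos_lin[OF linCJ] card_pos_lin[OF linCA] NI_pos by auto
  have "kap\<^sup>2 = real (card CJ) / (real NI * real (card CA))"
    unfolding kap_def by (rule real_sqrt_pow2) simp
  hence "complex_of_real (kap\<^sup>2) = of_nat (card CJ) / (of_nat NI * of_nat (card CA))" by simp
  moreover have "CA \<noteq> {}" "CJ \<noteq> {}" using pos by auto
  ultimately show ?thesis using pos by (simp add: field_simps)
qed

lemma PA_adj: "madj PA = PA" unfolding PA_def by (rule Proj_adj[OF linCA CA_sub])
lemma PA_idem: "mmul PA PA = PA" unfolding PA_def by (rule Proj_idem[OF linCA CA_sub])

lemma K0_sq: "mmul (madj K0) K0 = K0"
proof -
  have "madj K0 = K0" unfolding K0_def madj_mdiff PA_adj by simp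
  hence "mmul (madj K0) K0 = mdiff (mdiff mid PA) (mdiff PA (mmul PA PA))"
    unfolding K0_def by (simp add: mmul_mdiff_left mmul_mdiff_right)
  also have "\<dots> = K0" unfolding PA_idem K0_def mdiff_def by simp
  finally show ?thesis .
qed

lemma complete: "madd (msum (VS I) (\<lambda>e. mmul (madj (Ke e)) (Ke e))) (mmul (madj K0) K0) = mid"
proof -
  have "msum (VS I) (\<lambda>e. mmul (madj (Ke e)) (Ke e)) = mscale (complex_of_real (kap\<^sup>2)) (msum (VS I) (\<lambda>e. conjm (pauliE e) PJ))"
    unfolding madj_Ke_Ke mscale_msum ..
  also have "\<dots> = PA" unfolding key_sum mscale_mscale kap_sq by simp
  finally have s1: "msum (VS I) (\<lambda>e. mmul (madj (Ke e)) (Ke e)) = PA" .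
  show ?thesis unfolding s1 K0_sq unfolding K0_def madd_def mdiff_def by simp
qed

lemma kraus_As:
  assumes es: "set es = VS I" "distinct es"
  shows "kraus_map J (map Ke es @ [K0]) rho = madd (msum (VS I) (\<lambda>e. conjm (Ke e) rho)) (conjm K0 rho)"
proof (intro ext)
  fix x y
  have "kraus_map J (map Ke es @ [K0]) rho x y
      = (\<Sum>e\<leftarrow>es. conjm (lift_op J (Ke e)) rho x y) + conjm (lift_op J K0) rho x y"
    unfolding kraus_as_sum by (simp add: comp_def)
  also have "(\<Sum>e\<leftarrow>es. conjm (lift_op J (Ke e)) rho x y) = (\<Sum>e\<in>VS I. conjm (lift_op J (Ke e)) rho x y)"
    using sum_list_distinct_conv_sum_set[OF es(2)] es(1) by simp
  also have "\<dots> = (\<Sum>e\<in>VS I. conjm (Ke e) rho x y)"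
    by (rule sum.cong) (auto simp: lift_loc[OF loc_Ke])
  finally show "kraus_map J (map Ke es @ [K0]) rho x y = madd (msum (VS I) (\<lambda>e. conjm (Ke e) rho)) (conjm K0 rho) x y"
    unfolding madd_def msum_def lift_loc[OF loc_K0] .
qed

lemma trace_pres:
  assumes es: "set es = VS I" "distinct es"
  shows "mtrace (kraus_map J (map Ke es @ [K0]) rho) = mtrace rho"
proof -
  have "mtrace (kraus_map J (map Ke es @ [K0]) rho)
      = mtrace (mmul (madd (msum (VS I) (\<lambda>e. mmul (madj (Ke e)) (Ke e))) (mmul (madj K0) K0)) rho)"
    unfolding kraus_As[OF es] mtrace_madd mtrace_msum mtrace_conjm mmul_madd_left mmul_msum_left ..
  thus ?thesis unfolding complete by simp
qed

lemma mapply_mdiff: "mapply (mdiff A B) v = (\<lambda>x. mapply A v x - mapply B v x)"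
  unfolding mapply_def mdiff_def by (simp add: left_diff_distrib sum_subtractf)

lemma PA_commute:
  assumes f: "f \<in> VS I"
  shows "mmul PA (pauliE f) = mmul (pauliE f) PA"
proof -
  have "mmul (G c) (pauliE f) = mmul (pauliE f) (G c)" if c: "c \<in> CA" for c
  proof -
    have "ssupp f \<inter> ssupp c = {}" using f c unfolding VS_def CA_def by auto
    hence s: "symp f c = 0" by (rule symp_disjoint)
    show ?thesis unfolding G_def mmul_mscale_left mmul_mscale_right pauliE_commute[of c f] s chi_zero by simp
  qed
  thus ?thesis unfolding PA_def Proj_def mmul_mscale_left mmul_mscale_right mmul_msum_left mmul_msum_right
    by (simp cong: msum_cong)
qed

lemma K0_kill:
  assumes f: "f \<in> VS I" and phi: "phi \<in> Q"
  shows "mapply K0 (mapply (pauliE f) phi) = (\<lambda>x. 0)"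
proof -
  have "mapply PA (mapply (pauliE f) phi) = mapply (mmul PA (pauliE f)) phi" by (simp only: mapply_mmul)
  also have "\<dots> = mapply (pauliE f) (mapply PA phi)" unfolding PA_commute[OF f] by (simp only: mapply_mmul)
  also have "mapply PA phi = phi" unfolding PA_def by (rule Proj_fix[OF linCA CA_sub phi])
  finally have "mapply PA (mapply (pauliE f) phi) = mapply (pauliE f) phi" .
  thus ?thesis unfolding K0_def mapply_mdiff by simp
qed

lemma PJ_kill:
  assumes gC: "g \<notin> C" and gI: "ssupp g \<subseteq> I" and phi: "phi \<in> Q"
  shows "mapply PJ (mapply (pauliE g) phi) = (\<lambda>x. 0)"
proof -
  obtain c where c: "c \<in> C" "ssupp c \<subseteq> J" "symp g c \<noteq> 0" using star[OF gI] gC by blast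
  obtain s where s: "chi (s * symp g c) \<noteq> 1" using chi_exists_scaled[OF c(3)] by blast
  define c' where "c' = sscale s c"
  have c'C: "c' \<in> CJ"
  proof -
    have "c' \<in> C" unfolding c'_def by (rule linear_codeD(3)[OF lin c(1)])
    moreover have "c' \<in> VS J" unfolding c'_def using linear_codeD(3)[OF VS_linear, of c J s] c(2) by (simp add: VS_def)
    ultimately show ?thesis unfolding CJ_def by simp
  qed
  have sc: "symp g c' = s * symp g c" unfolding c'_def by (rule symp_sscale_right)
  define v where "v = mapply PJ (mapply (pauliE g) phi)"
  have "mmul (G c') (pauliE g) = mscale (chi (symp g c')) (mmul (pauliE g) (G c'))"
    unfolding G_def mmul_mscale_left mmul_mscale_right pauliE_commute[of c' g] mscale_mscale by (simp add: mult.commute)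
  hence "mapply (G c') (mapply (pauliE g) phi) = (\<lambda>x. chi (symp g c') * mapply (pauliE g) (mapply (G c') phi) x)"
  proof -
    assume h0: "mmul (G c') (pauliE g) = mscale (chi (symp g c')) (mmul (pauliE g) (G c'))"
    have "mapply (G c') (mapply (pauliE g) phi) = mapply (mmul (G c') (pauliE g)) phi" by (simp only: mapply_mmul)
    also have "\<dots> = (\<lambda>x. chi (symp g c') * mapply (mmul (pauliE g) (G c')) phi x)" unfolding h0 mapply_mscale ..
    also have "\<dots> = (\<lambda>x. chi (symp g c') * mapply (pauliE g) (mapply (G c') phi) x)" by (simp only: mapply_mmul)
    finally show ?thesis .
  qed
  also have "mapply (G c') phi = phi" by (rule mapply_G[OF phi]) (use CJ_sub c'C in blast)
  finally have h: "mapply (G c') (mapply (pauliE g) phi) = (\<lambda>x. chi (symp g c') * mapply (pauliE g) phi x)" .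
  have "v = mapply (mmul PJ (G c')) (mapply (pauliE g) phi)"
    unfolding v_def PJ_def Proj_G[OF linCJ CJ_sub c'C] ..
  also have "\<dots> = (\<lambda>x. chi (symp g c') * v x)" unfolding mapply_mmul h mapply_scale v_def ..
  finally have "v = (\<lambda>x. chi (s * symp g c) * v x)" unfolding sc .
  hence vx: "\<And>x. v x = chi (s * symp g c) * v x" by (rule fun_cong)
  have "\<And>x. (1 - chi (s * symp g c)) * v x = 0"
  proof -
    fix x
    have "(1 - chi (s * symp g c)) * v x = v x - chi (s * symp g c) * v x" by (simp add: algebra_simps)
    also have "\<dots> = 0" using vx[of x] by simp
    finally show "(1 - chi (s * symp g c)) * v x = 0" .
  qed
  hence "\<And>x. v x = 0" using s by simp
  thus ?thesis unfolding v_def by auto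
qed

lemma Ke_act:
  assumes e: "e \<in> VS I" and f: "f \<in> VS I" and phi: "phi \<in> Q"
  shows "\<exists>a. mapply (Ke e) (mapply (pauliE f) phi) = (\<lambda>x. a * phi x)"
proof -
  define g where "g = sadd (sneg e) f"
  have gI: "g \<in> VS I" unfolding g_def by (rule linear_codeD(2)[OF VS_linear linear_codeD(4)[OF VS_linear e] f])
  obtain w where w: "mmul (madj (pauliE e)) (pauliE f) = mscale w (pauliE g)"
    unfolding madj_pauliE mmul_mscale_left pauliE_mult mscale_mscale g_def by blast
  have "mapply (mmul PJ (madj (pauliE e))) (mapply (pauliE f) phi) = mapply PJ (mapply (mmul (madj (pauliE e)) (pauliE f)) phi)"
    by (simp only: mapply_mmul)
  also have "\<dots> = mapply PJ (\<lambda>x. w * mapply (pauliE g) phi x)" unfolding w mapply_mscale ..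
  also have "\<dots> = (\<lambda>x. w * mapply PJ (mapply (pauliE g) phi) x)" by (rule mapply_scale)
  finally have "mapply (Ke e) (mapply (pauliE f) phi) = (\<lambda>x. complex_of_real kap * (w * mapply PJ (mapply (pauliE g) phi) x))"
    unfolding Ke_def mapply_mscale by simp
  hence "mapply (Ke e) (mapply (pauliE f) phi) = (\<lambda>x. complex_of_real kap * w * mapply PJ (mapply (pauliE g) phi) x)"
    by (simp add: mult.assoc)
  moreover have "\<exists>b. mapply PJ (mapply (pauliE g) phi) = (\<lambda>x. b * phi x)"
  proof (cases "g \<in> C")
    case True
    have "mapply (pauliE g) phi = (\<lambda>x. lE g * phi x)" using phi True unfolding stab_code_iff by blast
    hence "mapply PJ (mapply (pauliE g) phi) = (\<lambda>x. lE g * phi x)"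
      unfolding PJ_def by (simp add: mapply_scale Proj_fix[OF linCJ CJ_sub phi])
    thus ?thesis by blast
  next
    case False
    have "ssupp g \<subseteq> I" using gI unfolding VS_def by simp
    hence "mapply PJ (mapply (pauliE g) phi) = (\<lambda>x. 0 * phi x)" using PJ_kill[OF False _ phi] by simp
    thus ?thesis by blast
  qed
  ultimately obtain b where
    h1: "mapply (Ke e) (mapply (pauliE f) phi) = (\<lambda>x. complex_of_real kap * w * mapply PJ (mapply (pauliE g) phi) x)"
    and h2: "mapply PJ (mapply (pauliE g) phi) = (\<lambda>x. b * phi x)" by blast
  show ?thesis unfolding h1 h2 by (intro exI[of _ "complex_of_real kap * w * b"]) (simp add: mult.assoc)
qed

lemma recover:
  assumes es: "set es = VS I" "distinct es" and phi: "phi \<in> Q"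
  shows "kraus_map J (map Ke es @ [K0]) (Gamma I (ketbra phi)) = ketbra phi"
proof -
  define a where "a = (\<lambda>e f. SOME a. mapply (Ke e) (mapply (pauliE f) phi) = (\<lambda>x. a * phi x))"
  have a: "mapply (Ke e) (mapply (pauliE f) phi) = (\<lambda>x. a e f * phi x)" if "e \<in> VS I" "f \<in> VS I" for e f
    unfolding a_def using someI_ex[OF Ke_act[OF that phi]] .
  have G: "Gamma I (ketbra phi) = mscale (1 / of_nat NI) (msum (VS I) (\<lambda>f. ketbra (mapply (pauliE f) phi)))"
    unfolding Gamma_msum' NI_def conjm_ketbra ..
  have p1: "conjm (Ke e) (Gamma I (ketbra phi)) = mscale (1 / of_nat NI) (mscale (\<Sum>f\<in>VS I. a e f * cnj (a e f)) (ketbra phi))"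
    if e: "e \<in> VS I" for e
  proof -
    have "msum (VS I) (\<lambda>f. conjm (Ke e) (ketbra (mapply (pauliE f) phi))) = msum (VS I) (\<lambda>f. mscale (a e f * cnj (a e f)) (ketbra phi))"
      by (rule msum_cong) (simp add: conjm_ketbra a[OF e] ketbra_scale)
    thus ?thesis unfolding G conjm_mscale_right conjm_msum msum_mscale by simp
  qed
  have p0: "conjm K0 (Gamma I (ketbra phi)) = mzero"
  proof -
    have "msum (VS I) (\<lambda>f. conjm K0 (ketbra (mapply (pauliE f) phi))) = msum (VS I) (\<lambda>f::('n, 'q) svec. mzero)"
      by (rule msum_cong) (simp add: conjm_ketbra K0_kill[OF _ phi] ketbra_zero)
    thus ?thesis unfolding G conjm_mscale_right conjm_msum msum_mzero by (simp add: mscale_mzero)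
  qed
  define mu where "mu = (\<Sum>e\<in>VS I. 1 / of_nat NI * (\<Sum>f\<in>VS I. a e f * cnj (a e f)))"
  have K: "kraus_map J (map Ke es @ [K0]) (Gamma I (ketbra phi)) = mscale mu (ketbra phi)"
  proof -
    have "msum (VS I) (\<lambda>e. conjm (Ke e) (Gamma I (ketbra phi))) = msum (VS I) (\<lambda>e. mscale (1 / of_nat NI * (\<Sum>f\<in>VS I. a e f * cnj (a e f))) (ketbra phi))"
      by (rule msum_cong) (simp add: p1 mscale_mscale)
    thus ?thesis unfolding kraus_As[OF es] p0 madd_mzero msum_mscale mu_def by simp
  qed
  have tr: "mu * mtrace (ketbra phi) = mtrace (ketbra phi)"
    using trace_pres[OF es, of "Gamma I (ketbra phi)"] mtrace_Gamma[of I "ketbra phi"] unfolding K mtrace_mscale by simp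
  show ?thesis
  proof (cases "mtrace (ketbra phi) = 0")
    case False
    hence "mu = 1" using tr by simp
    thus ?thesis using K by simp
  next
    case True
    hence "(\<Sum>x\<in>UNIV. (norm (phi x))\<^sup>2) = 0" unfolding mtrace_ketbra by (simp only: of_real_sum[symmetric] of_real_eq_0_iff)
    hence "\<forall>x\<in>UNIV. (norm (phi x))\<^sup>2 = 0" by (subst (asm) sum_nonneg_eq_0_iff) auto
    hence "phi = (\<lambda>x. 0)" by auto
    thus ?thesis using K by (simp add: ketbra_zero mscale_mzero)
  qed
qed

end

end


lemma shorten_punct_char:
  "x \<in> shorten I (puncture J D) \<longleftrightarrow>
     (\<exists>y\<in>D. (\<forall>j\<in>J - I. fst y j = 0 \<and> snd y j = 0) \<and> x = proj (I \<inter> J) y)"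
proof
  assume "x \<in> shorten I (puncture J D)"
  then obtain w where w: "w \<in> proj J ` D" "ssupp w \<subseteq> I" "x = proj I w"
    unfolding shorten_def puncture_def by blast
  then obtain y where y: "y \<in> D" "w = proj J y" by blast
  have "\<forall>j\<in>J - I. fst y j = 0 \<and> snd y j = 0"
    using w(2) unfolding y(2) ssupp_iff fst_proj snd_proj by auto
  moreover have "x = proj (I \<inter> J) y" unfolding w(3) y(2) proj_proj ..
  ultimately show "\<exists>y\<in>D. (\<forall>j\<in>J - I. fst y j = 0 \<and> snd y j = 0) \<and> x = proj (I \<inter> J) y" using y(1) by blast
next
  assume "\<exists>y\<in>D. (\<forall>j\<in>J - I. fst y j = 0 \<and> snd y j = 0) \<and> x = proj (I \<inter> J) y"
  then obtain y where y: "y \<in> D" "\<forall>j\<in>J - I. fst y j = 0 \<and> snd y j = 0" "x = proj (I \<inter> J) y" by blast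
  have "ssupp (proj J y) \<subseteq> I"
    using y(2) unfolding ssupp_iff fst_proj snd_proj by auto
  moreover have "proj J y \<in> proj J ` D" using y(1) by blast
  moreover have "x = proj I (proj J y)" unfolding y(3) proj_proj ..
  ultimately show "x \<in> shorten I (puncture J D)" unfolding shorten_def puncture_def by blast
qed

lemma shorten_char: "x \<in> shorten I D \<longleftrightarrow> x \<in> D \<and> ssupp x \<subseteq> I"
proof
  assume "x \<in> shorten I D"
  then obtain y where y: "y \<in> D" "ssupp y \<subseteq> I" "x = proj I y" unfolding shorten_def by blast
  have "x = y" using proj_id[OF y(2)] y(3) by simp
  thus "x \<in> D \<and> ssupp x \<subseteq> I" using y by simp
next
  assume "x \<in> D \<and> ssupp x \<subseteq> I"
  thus "x \<in> shorten I D" unfolding shorten_def using proj_id[of x I] by (auto intro!: image_eqI[of _ _ x])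
qed

theorem theorem18:
  fixes C :: "('n::finite, 'q::{finite,field}) svec set"
    and I J :: "'n set"
    and lam :: "('n, 'q) qmat \<Rightarrow> complex"
  assumes "linear_code C"
    and "symp_self_orth C"
    and "I \<noteq> {}" and "I \<subset> J"
    and "stab_character C lam"
  shows "locally_recoverable I J (stab_code C lam) \<longleftrightarrow>
         shorten I (puncture J (sdual C)) = shorten I C"
proof -
  interpret stab C lam using assms(1,5) by unfold_locales
  have IJ: "I \<subseteq> J" using assms(4) by auto
  have IJ': "I \<inter> J = I" using IJ by auto
  have so: "C \<subseteq> sdual C" using assms(2) unfolding symp_self_orth_def .
  show ?thesis
  proof
    assume "locally_recoverable I J (stab_code C lam)"
    then obtain As where rec: "\<forall>\<phi>\<in>stab_code C lam. kraus_map J As (Gamma I (ketbra \<phi>)) = ketbra \<phi>"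
      unfolding locally_recoverable_def by blast
    show "shorten I (puncture J (sdual C)) = shorten I C"
    proof (intro set_eqI iffI)
      fix x assume "x \<in> shorten I (puncture J (sdual C))"
      then obtain y where y: "y \<in> sdual C" "\<forall>j\<in>J - I. fst y j = 0 \<and> snd y j = 0" "x = proj I y"
        unfolding shorten_punct_char IJ' by blast
      have "proj I y \<in> C" by (rule fwd_key[OF IJ rec y(1) y(2)])
      thus "x \<in> shorten I C" unfolding shorten_char y(3) using ssupp_proj[of I y] by simp
    next
      fix x assume "x \<in> shorten I C"
      hence x: "x \<in> C" "ssupp x \<subseteq> I" unfolding shorten_char by auto
      have "x \<in> sdual C" using x(1) so by blast
      moreover have "\<forall>j\<in>J - I. fst x j = 0 \<and> snd x j = 0" using x(2) unfolding ssupp_iff by auto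
      moreover have "x = proj I x" using proj_id[OF x(2)] by simp
      ultimately show "x \<in> shorten I (puncture J (sdual C))"
        unfolding shorten_punct_char IJ' by blast
    qed
  next
    assume eq: "shorten I (puncture J (sdual C)) = shorten I C"
    have star: "g \<in> C" if gI: "ssupp g \<subseteq> I" and gp: "\<forall>c\<in>C. ssupp c \<subseteq> J \<longrightarrow> symp g c = 0" for g
    proof -
      have "ssupp g \<subseteq> J" using gI IJ by auto
      hence "g \<in> proj J ` sdual C" by (rule duality[OF assms(1) _ gp])
      then obtain y0 where y0: "g = proj J y0" "y0 \<in> sdual C" by (rule imageE)
      have y: "y0 \<in> sdual C" "g = proj J y0" using y0 by simp_all
      have yA: "\<forall>j\<in>J - I. fst y0 j = 0 \<and> snd y0 j = 0"
        using gI unfolding y(2) ssupp_iff fst_proj snd_proj by auto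
      have "proj I y0 \<in> shorten I (puncture J (sdual C))"
        unfolding shorten_punct_char IJ' by (rule bexI[of _ y0]) (use yA y(1) in simp_all)
      hence "proj I y0 \<in> C" unfolding eq shorten_char by simp
      moreover have "proj I y0 = g" unfolding y(2) proj_def using yA IJ by (auto simp: prod_eq_iff fun_eq_iff)
      ultimately show ?thesis by simp
    qed
    obtain es :: "('n, 'q) svec list" where es: "set es = VS I" "distinct es"
      using finite_distinct_list[OF finite_svec] by blast
    show "locally_recoverable I J (stab_code C lam)"
      unfolding locally_recoverable_def
    proof (intro exI conjI allI ballI)
      fix rho
      show "mtrace (kraus_map J (map (Ke I J) es @ [K0 I J]) rho) = mtrace rho"
        by (rule trace_pres[OF IJ star es])
    next
      fix phi assume phi: "phi \<in> stab_code C lam"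
      show "kraus_map J (map (Ke I J) es @ [K0 I J]) (Gamma I (ketbra phi)) = ketbra phi"
        using recover[OF IJ star es phi] .
    qed
  qed
qed

end
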